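(* Let $t\mapsto f_t$ be a $C^1$ family of piecewise expanding $C^1$ unimodal maps such that $f_0$ is good and $J(f_0,\partial_tf_t|_{t=0})\neq0$. (A) If the critical point of $f_0$ is periodic, then there exists a sequence of parameters $t_n\to0$ such that the critical point of $f_{t_n}$ is not periodic. (B) If the critical point of $f_0$ is not periodic, then there exists a sequence of parameters $t_n\to0$ such that the critical point of $f_{t_n}$ is periodic.
   Context: Let $I=[-1,1]$ and $c=0$ (the critical point). $\mathcal B^1(I)$ is the Banach space of continuous $f:I\to\mathbb R$ that are $C^1$ on $[-1,0]$ and on $[0,1]$ with $f(1)=f(-1)$, normed by $|f|_1=\max\{|f|_{C^1[-1,0]},|f|_{C^1[0,1]}\}$. A piecewise expanding $C^1$ unimodal map is an $f\in\mathcal B^1(I)$ with $f(-1)=f(1)=-1$, $\inf_{x\in[-1,0]}Df(x)>1$, $\sup_{x\in[0,1]}Df(x)<-1$ and $f(0)\le1$; the set of these is $\mathcal U^1$. A $C^1$ family of such maps is a $C^1$ map $t\mapsto f_t$ from an interval around $0$ into $\mathcal U^1\subset\mathcal B^1(I)$. $f$ is good if either $c$ is not periodic, or $c$ has prime period $p\ge2$ and $|Df^{p-1}(f(c))|\min\{|Df^+(c)|,|Df^-(c)|\}>2$ ($Df^\pm(c)$ one-sided derivatives at $c$). For bounded $v:I\to\mathbb R$: if $c$ is not periodic for $f$, $J(f,v)=\sum_{i=0}^\infty \frac{v(f^i(c))}{Df^i(f(c))}$; if $c$ has prime period $p$, $J(f,v)=\sum_{i=0}^{p-1}\frac{v(f^i(c))}{Df^i(f(c))}$.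 *)

theory Defs
  imports Complex_Main
begin

text \<open>I = [-1,1], critical point c = 0. Functions are real \<Rightarrow> real; only values on I matter.\<close>

definition C1_on :: "real \<Rightarrow> real \<Rightarrow> (real \<Rightarrow> real) \<Rightarrow> (real \<Rightarrow> real) \<Rightarrow> bool" where
  "C1_on a b g g' \<longleftrightarrow> continuous_on {a..b} g' \<and>
     (\<forall>x\<in>{a..b}. (g has_real_derivative g' x) (at x within {a..b}))"

definition DL :: "(real \<Rightarrow> real) \<Rightarrow> real \<Rightarrow> real" where
  "DL g x = (SOME d. (g has_real_derivative d) (at x within {-1..0}))"

definition DR :: "(real \<Rightarrow> real) \<Rightarrow> real \<Rightarrow> real" where
  "DR g x = (SOME d. (g has_real_derivative d) (at x within {0..1}))"

definition B1 :: "(real \<Rightarrow> real) \<Rightarrow> bool" where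
  "B1 g \<longleftrightarrow> continuous_on {-1..1} g \<and> (\<exists>g'. C1_on (-1) 0 g g') \<and> (\<exists>g'. C1_on 0 1 g g')
     \<and> g 1 = g (-1)"

definition normB1 :: "(real \<Rightarrow> real) \<Rightarrow> real" where
  "normB1 g = max (max (SUP x\<in>{-1..0}. \<bar>g x\<bar>) (SUP x\<in>{-1..0}. \<bar>DL g x\<bar>))
                  (max (SUP x\<in>{0..1}. \<bar>g x\<bar>) (SUP x\<in>{0..1}. \<bar>DR g x\<bar>))"

definition U1 :: "(real \<Rightarrow> real) \<Rightarrow> bool" where
  "U1 f \<longleftrightarrow> B1 f \<and> f (-1) = -1 \<and> f 1 = -1 \<and>
     (INF x\<in>{-1..0}. DL f x) > 1 \<and> (SUP x\<in>{0..1}. DR f x) < -1 \<and> f 0 \<le> 1"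

definition C1_family :: "real \<Rightarrow> (real \<Rightarrow> real \<Rightarrow> real) \<Rightarrow> (real \<Rightarrow> real \<Rightarrow> real) \<Rightarrow> bool" where
  "C1_family e f v \<longleftrightarrow> e > 0 \<and>
     (\<forall>t\<in>{-e<..<e}. U1 (f t) \<and> B1 (v t) \<and>
        ((\<lambda>h. normB1 (\<lambda>x. (f (t + h) x - f t x) / h - v t x)) \<longlongrightarrow> 0) (at 0) \<and>
        ((\<lambda>s. normB1 (\<lambda>x. v s x - v t x)) \<longlongrightarrow> 0) (at t within {-e<..<e}))"

definition Df :: "(real \<Rightarrow> real) \<Rightarrow> real \<Rightarrow> real" where
  "Df f x = (if x \<le> 0 then DL f x else DR f x)"

definition Dfn :: "(real \<Rightarrow> real) \<Rightarrow> nat \<Rightarrow> real \<Rightarrow> real" where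
  "Dfn f n y = (\<Prod>j<n. Df f ((f ^^ j) y))"

definition crit_periodic :: "(real \<Rightarrow> real) \<Rightarrow> bool" where
  "crit_periodic f \<longleftrightarrow> (\<exists>n>0. (f ^^ n) 0 = 0)"

definition prime_period :: "(real \<Rightarrow> real) \<Rightarrow> nat" where
  "prime_period f = (LEAST n. n > 0 \<and> (f ^^ n) 0 = 0)"

definition good :: "(real \<Rightarrow> real) \<Rightarrow> bool" where
  "good f \<longleftrightarrow> \<not> crit_periodic f \<or>
     (prime_period f \<ge> 2 \<and>
      \<bar>Dfn f (prime_period f - 1) (f 0)\<bar> * min \<bar>DR f 0\<bar> \<bar>DL f 0\<bar> > 2)"

definition J :: "(real \<Rightarrow> real) \<Rightarrow> (real \<Rightarrow> real) \<Rightarrow> real" where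
  "J f v = (if crit_periodic f
            then (\<Sum>i<prime_period f. v ((f ^^ i) 0) / Dfn f i (f 0))
            else (\<Sum>i. v ((f ^^ i) 0) / Dfn f i (f 0)))"

end

theory Submission
  imports Defs "HOL-Analysis.Analysis"
begin


lemma at_within_Icc_nbot: "(a::real) < b \<Longrightarrow> x \<in> {a..b} \<Longrightarrow> at x within {a..b} \<noteq> bot"
  by (simp add: trivial_limit_within)

lemma C1_DL: assumes "C1_on (-1) 0 g g'" "x \<in> {-1..0}"
  shows "DL g x = g' x"
proof -
  have d: "(g has_real_derivative g' x) (at x within {-1..0})" using assms unfolding C1_on_def by auto
  then have "(g has_real_derivative DL g x) (at x within {-1..0})"
    unfolding DL_def by (rule someI)
  then show ?thesis using d has_field_derivative_unique at_within_Icc_nbot[of "-1" 0 x] assms(2) by auto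
qed

lemma C1_DR: assumes "C1_on 0 1 g g'" "x \<in> {0..1}"
  shows "DR g x = g' x"
proof -
  have d: "(g has_real_derivative g' x) (at x within {0..1})" using assms unfolding C1_on_def by auto
  then have "(g has_real_derivative DR g x) (at x within {0..1})"
    unfolding DR_def by (rule someI)
  then show ?thesis using d has_field_derivative_unique at_within_Icc_nbot[of 0 1 x] assms(2) by auto
qed

lemma B1_DL: assumes "B1 g"
  shows "C1_on (-1) 0 g (DL g)"
proof -
  obtain g' where g': "C1_on (-1) 0 g g'" using assms unfolding B1_def by auto
  have "continuous_on {-1..0} (DL g)"
    using g' C1_DL[OF g'] unfolding C1_on_def by (metis (no_types, lifting) continuous_on_cong)
  moreover have "\<forall>x\<in>{-1..0}. (g has_real_derivative DL g x) (at x within {-1..0})"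
    using g' C1_DL[OF g'] unfolding C1_on_def by auto
  ultimately show ?thesis unfolding C1_on_def by auto
qed

lemma B1_DR: assumes "B1 g"
  shows "C1_on 0 1 g (DR g)"
proof -
  obtain g' where g': "C1_on 0 1 g g'" using assms unfolding B1_def by auto
  have "continuous_on {0..1} (DR g)"
    using g' C1_DR[OF g'] unfolding C1_on_def by (metis (no_types, lifting) continuous_on_cong)
  moreover have "\<forall>x\<in>{0..1}. (g has_real_derivative DR g x) (at x within {0..1})"
    using g' C1_DR[OF g'] unfolding C1_on_def by auto
  ultimately show ?thesis unfolding C1_on_def by auto
qed

lemma C1_lin: assumes "C1_on a b g g'" "C1_on a b h h'"
  shows "C1_on a b (\<lambda>x. c * g x + d * h x) (\<lambda>x. c * g' x + d * h' x)"
  using assms unfolding C1_on_def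
  by (auto intro!: continuous_intros derivative_eq_intros)

lemma B1_lin: assumes "B1 g" "B1 h"
  shows "B1 (\<lambda>x. c * g x + d * h x)"
  using assms C1_lin unfolding B1_def by (auto intro!: continuous_intros) blast+

lemma DL_lin: assumes "B1 g" "B1 h" "x \<in> {-1..0}"
  shows "DL (\<lambda>x. c * g x + d * h x) x = c * DL g x + d * DL h x"
  using C1_DL[OF C1_lin[OF B1_DL[OF assms(1)] B1_DL[OF assms(2)]] assms(3)] .

lemma DR_lin: assumes "B1 g" "B1 h" "x \<in> {0..1}"
  shows "DR (\<lambda>x. c * g x + d * h x) x = c * DR g x + d * DR h x"
  using C1_DR[OF C1_lin[OF B1_DR[OF assms(1)] B1_DR[OF assms(2)]] assms(3)] .

lemma bdd_abs_cont: assumes "continuous_on {a..b} (g::real\<Rightarrow>real)"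
  shows "bdd_above ((\<lambda>x. \<bar>g x\<bar>) ` {a..b})"
proof -
  have "compact ((\<lambda>x. \<bar>g x\<bar>) ` {a..b})"
    by (intro compact_continuous_image continuous_on_rabs assms compact_Icc)
  then show ?thesis by (intro bounded_imp_bdd_above compact_imp_bounded)
qed

lemma normB1_ge: assumes "B1 g"
  shows "x \<in> {-1..1} \<Longrightarrow> \<bar>g x\<bar> \<le> normB1 g"
    and "x \<in> {-1..0} \<Longrightarrow> \<bar>DL g x\<bar> \<le> normB1 g"
    and "x \<in> {0..1} \<Longrightarrow> \<bar>DR g x\<bar> \<le> normB1 g"
proof -
  have cg: "continuous_on {-1..1} g" using assms unfolding B1_def by auto
  have c1: "continuous_on {-1..0} g" "continuous_on {0..1} g"
    using continuous_on_subset[OF cg] by auto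
  have c2: "continuous_on {-1..0} (DL g)" "continuous_on {0..1} (DR g)"
    using B1_DL[OF assms] B1_DR[OF assms] unfolding C1_on_def by auto
  note b = bdd_abs_cont[OF c1(1)] bdd_abs_cont[OF c1(2)] bdd_abs_cont[OF c2(1)] bdd_abs_cont[OF c2(2)]
  show "x \<in> {-1..1} \<Longrightarrow> \<bar>g x\<bar> \<le> normB1 g"
  proof -
    assume x: "x \<in> {-1..1}"
    show ?thesis
    proof (cases "x \<le> 0")
      case True
      then have "\<bar>g x\<bar> \<le> (SUP x\<in>{-1..0}. \<bar>g x\<bar>)" using x b(1) by (intro cSUP_upper) auto
      then show ?thesis unfolding normB1_def by linarith
    next
      case False
      then have "\<bar>g x\<bar> \<le> (SUP x\<in>{0..1}. \<bar>g x\<bar>)" using x b(2) by (intro cSUP_upper) auto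
      then show ?thesis unfolding normB1_def by linarith
    qed
  qed
  show "x \<in> {-1..0} \<Longrightarrow> \<bar>DL g x\<bar> \<le> normB1 g"
  proof -
    assume x: "x \<in> {-1..0}"
    then have "\<bar>DL g x\<bar> \<le> (SUP x\<in>{-1..0}. \<bar>DL g x\<bar>)" using b(3) by (intro cSUP_upper) auto
    then show ?thesis unfolding normB1_def by linarith
  qed
  show "x \<in> {0..1} \<Longrightarrow> \<bar>DR g x\<bar> \<le> normB1 g"
  proof -
    assume x: "x \<in> {0..1}"
    then have "\<bar>DR g x\<bar> \<le> (SUP x\<in>{0..1}. \<bar>DR g x\<bar>)" using b(4) by (intro cSUP_upper) auto
    then show ?thesis unfolding normB1_def by linarith
  qed
qed



lemma C1_cont: "C1_on c d g g' \<Longrightarrow> continuous_on {c..d} g"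
  unfolding C1_on_def by (intro DERIV_continuous_on) auto

lemma C1_at: assumes "C1_on c d g g'" "c < x" "x < d"
  shows "(g has_real_derivative g' x) (at x)"
proof -
  have "x \<in> {c..d}" using assms by auto
  then have "(g has_real_derivative g' x) (at x within {c..d})" using assms(1) unfolding C1_on_def by auto
  then show ?thesis using at_within_Icc_at[of c x d] assms(2,3) by simp
qed

lemma C1_lower: assumes "C1_on c d g g'" "c \<le> a" "a \<le> b" "b \<le> d" "\<And>x. x \<in> {a..b} \<Longrightarrow> g' x \<ge> L"
  shows "g b - g a \<ge> L * (b - a)"
proof -
  let ?h = "\<lambda>x. g x - L * x"
  have sub: "{a..b} \<subseteq> {c..d}" using assms(2-4) by auto
  have "continuous_on {a..b} g" by (rule continuous_on_subset[OF C1_cont[OF assms(1)] sub])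
  then have cont: "continuous_on {a..b} ?h" by (auto intro!: continuous_intros)
  have der: "\<exists>y. DERIV ?h x :> y \<and> y \<ge> 0" if "a < x" "x < b" for x
  proof -
    have "c < x" "x < d" using that assms(2-4) by linarith+
    then have "DERIV g x :> g' x" using C1_at[OF assms(1)] by blast
    then have "DERIV ?h x :> g' x - L" by (auto intro!: derivative_eq_intros)
    moreover have "g' x \<ge> L" using assms(5)[of x] that by auto
    ultimately show ?thesis by auto
  qed
  have "?h a \<le> ?h b" by (rule DERIV_nonneg_imp_increasing_open[OF assms(3) der cont])
  then show ?thesis by (simp add: algebra_simps)
qed


lemma C1_upper: assumes "C1_on c d g g'" "c \<le> a" "a \<le> b" "b \<le> d" "\<And>x. x \<in> {a..b} \<Longrightarrow> g' x \<le> K"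
  shows "g b - g a \<le> K * (b - a)"
proof -
  have "C1_on c d (\<lambda>x. (-1) * g x + 0 * g x) (\<lambda>x. (-1) * g' x + 0 * g' x)"
    by (rule C1_lin[OF assms(1) assms(1)])
  then have m: "C1_on c d (\<lambda>x. - g x) (\<lambda>x. - g' x)" by simp
  have "\<And>x. x \<in> {a..b} \<Longrightarrow> - g' x \<ge> - K" using assms(5) by simp
  from C1_lower[OF m assms(2-4) this] show ?thesis by (simp add: algebra_simps)
qed

lemma cont_bdd: assumes "continuous_on {a..b} (g::real\<Rightarrow>real)"
  shows "bdd_below (g ` {a..b})" "bdd_above (g ` {a..b})"
proof -
  have "compact (g ` {a..b})"
    by (intro compact_continuous_image assms compact_Icc)
  then have "bounded (g ` {a..b})" by (rule compact_imp_bounded)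
  then show "bdd_below (g ` {a..b})" "bdd_above (g ` {a..b})"
    by (rule bounded_imp_bdd_below, rule bounded_imp_bdd_above)
qed

lemma U1_B1: "U1 g \<Longrightarrow> B1 g" unfolding U1_def by auto

lemma U1_DL: assumes "U1 g" "x \<in> {-1..0}" shows "DL g x > 1"
proof -
  have c: "continuous_on {-1..0} (DL g)" using B1_DL[OF U1_B1[OF assms(1)]] unfolding C1_on_def by auto
  have "(INF x\<in>{-1..0}. DL g x) \<le> DL g x" by (rule cINF_lower[OF cont_bdd(1)[OF c] assms(2)])
  then show ?thesis using assms(1) unfolding U1_def by linarith
qed

lemma U1_DR: assumes "U1 g" "x \<in> {0..1}" shows "DR g x < -1"
proof -
  have c: "continuous_on {0..1} (DR g)" using B1_DR[OF U1_B1[OF assms(1)]] unfolding C1_on_def by auto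
  have "(SUP x\<in>{0..1}. DR g x) \<ge> DR g x" by (rule cSUP_upper[OF assms(2) cont_bdd(2)[OF c]])
  then show ?thesis using assms(1) unfolding U1_def by linarith
qed

lemma U1_L: "U1 g \<Longrightarrow> C1_on (-1) 0 g (DL g)" by (rule B1_DL[OF U1_B1])
lemma U1_R: "U1 g \<Longrightarrow> C1_on 0 1 g (DR g)" by (rule B1_DR[OF U1_B1])

lemma U1_incr: assumes "U1 g" "-1 \<le> a" "a \<le> b" "b \<le> 0" shows "g a \<le> g b"
proof -
  have "\<And>x. x \<in> {a..b} \<Longrightarrow> DL g x \<ge> 0"
  proof -
    fix x assume "x \<in> {a..b}" then have "x \<in> {-1..0}" using assms by auto
    from U1_DL[OF assms(1) this] show "DL g x \<ge> 0" by simp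
  qed
  from C1_lower[OF U1_L[OF assms(1)] assms(2-4) this] show ?thesis by simp
qed

lemma U1_decr: assumes "U1 g" "0 \<le> a" "a \<le> b" "b \<le> 1" shows "g b \<le> g a"
proof -
  have "\<And>x. x \<in> {a..b} \<Longrightarrow> DR g x \<le> 0"
  proof -
    fix x assume "x \<in> {a..b}" then have "x \<in> {0..1}" using assms by auto
    from U1_DR[OF assms(1) this] show "DR g x \<le> 0" by simp
  qed
  from C1_upper[OF U1_R[OF assms(1)] assms(2-4) this] show ?thesis by simp
qed

lemma U1_maps: assumes "U1 g" "x \<in> {-1..1}" shows "g x \<in> {-1..1}"
proof (cases "x \<le> 0")
  case True
  have "g (-1) \<le> g x" "g x \<le> g 0" using assms(2) True by (auto intro!: U1_incr[OF assms(1)])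
  then show ?thesis using assms unfolding U1_def by auto
next
  case False
  have "g 1 \<le> g x" "g x \<le> g 0" using assms(2) False by (auto intro!: U1_decr[OF assms(1)])
  then show ?thesis using assms unfolding U1_def by auto
qed

lemma U1_iter: assumes "U1 g" "x \<in> {-1..1}" shows "(g ^^ n) x \<in> {-1..1}"
proof (induction n)
  case 0 show ?case using assms(2) by simp
next
  case (Suc n) then show ?case using U1_maps[OF assms(1)] by simp
qed

lemma U1_pos0: assumes "U1 g" shows "g 0 > 0"
proof -
  let ?m = "INF x\<in>{-1..0}. DL g x"
  have c: "continuous_on {-1..0} (DL g)" using U1_L[OF assms] unfolding C1_on_def by auto
  have "\<And>x. x \<in> {-1..0} \<Longrightarrow> DL g x \<ge> ?m" by (rule cINF_lower[OF cont_bdd(1)[OF c]])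
  from C1_lower[OF U1_L[OF assms], of "-1" 0 ?m, OF _ _ _ this] have "g 0 - g (-1) \<ge> ?m" by simp
  then show ?thesis using assms unfolding U1_def by auto
qed



lemma C1_quot: assumes "C1_on a b g1 g1'" "C1_on a b g0 g0'" "C1_on a b w w'"
  shows "C1_on a b (\<lambda>x. (g1 x - g0 x) / h - w x) (\<lambda>x. (g1' x - g0' x) / h - w' x)"
proof -
  have c: "continuous_on {a..b} g1'" "continuous_on {a..b} g0'" "continuous_on {a..b} w'"
    using assms unfolding C1_on_def by auto
  have "continuous_on {a..b} (\<lambda>x. inverse h * (g1' x - g0' x) - w' x)"
    by (intro continuous_on_diff continuous_on_mult_left c)
  then have "continuous_on {a..b} (\<lambda>x. (g1' x - g0' x) / h - w' x)"
    by (simp add: divide_inverse mult.commute)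
  moreover have "((\<lambda>x. (g1 x - g0 x) / h - w x) has_real_derivative (g1' x - g0' x) / h - w' x) (at x within {a..b})"
    if x: "x \<in> {a..b}" for x
  proof -
    have d: "(g1 has_real_derivative g1' x) (at x within {a..b})" "(g0 has_real_derivative g0' x) (at x within {a..b})"
       "(w has_real_derivative w' x) (at x within {a..b})" using assms x unfolding C1_on_def by auto
    show ?thesis by (intro DERIV_diff DERIV_cdivide d)
  qed
  ultimately show ?thesis unfolding C1_on_def by blast
qed

lemma B1_quot: assumes "B1 g1" "B1 g0" "B1 w"
  shows "B1 (\<lambda>x. (g1 x - g0 x) / h - w x)"
proof -
  have "continuous_on {-1..1} (\<lambda>x. inverse h * (g1 x - g0 x) - w x)"
    using assms unfolding B1_def by (intro continuous_on_diff continuous_on_mult_left) auto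
  then have "continuous_on {-1..1} (\<lambda>x. (g1 x - g0 x) / h - w x)"
    by (simp add: divide_inverse mult.commute)
  moreover have "\<exists>g'. C1_on (-1) 0 (\<lambda>x. (g1 x - g0 x) / h - w x) g'"
    using C1_quot[OF B1_DL[OF assms(1)] B1_DL[OF assms(2)] B1_DL[OF assms(3)]] by blast
  moreover have "\<exists>g'. C1_on 0 1 (\<lambda>x. (g1 x - g0 x) / h - w x) g'"
    using C1_quot[OF B1_DR[OF assms(1)] B1_DR[OF assms(2)] B1_DR[OF assms(3)]] by blast
  moreover have "(g1 1 - g0 1) / h - w 1 = (g1 (-1) - g0 (-1)) / h - w (-1)"
    using assms unfolding B1_def by simp
  ultimately show ?thesis unfolding B1_def by blast
qed

lemma DL_quot: assumes "B1 g1" "B1 g0" "B1 w" "x \<in> {-1..0}"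
  shows "DL (\<lambda>x. (g1 x - g0 x) / h - w x) x = (DL g1 x - DL g0 x) / h - DL w x"
  using C1_DL[OF C1_quot[OF B1_DL[OF assms(1)] B1_DL[OF assms(2)] B1_DL[OF assms(3)]] assms(4)] .

lemma DR_quot: assumes "B1 g1" "B1 g0" "B1 w" "x \<in> {0..1}"
  shows "DR (\<lambda>x. (g1 x - g0 x) / h - w x) x = (DR g1 x - DR g0 x) / h - DR w x"
  using C1_DR[OF C1_quot[OF B1_DR[OF assms(1)] B1_DR[OF assms(2)] B1_DR[OF assms(3)]] assms(4)] .

lemma B1_diff: assumes "B1 g" "B1 h" shows "B1 (\<lambda>x. g x - h x)"
proof -
  have "B1 (\<lambda>x. 1 * g x + (-1) * h x)" by (rule B1_lin[OF assms])
  then show ?thesis by simp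
qed

lemma quot_bound: assumes "(h::real) \<noteq> 0" "\<bar>a / h - w\<bar> \<le> 1" "\<bar>w\<bar> \<le> C" "\<bar>h\<bar> * (1 + C) \<le> \<eta>"
  shows "\<bar>a\<bar> \<le> \<eta>"
proof -
  have "\<bar>a / h\<bar> \<le> 1 + C" using assms(2,3) by linarith
  then have "\<bar>a\<bar> / \<bar>h\<bar> \<le> 1 + C" by (simp add: abs_divide)
  then have "\<bar>a\<bar> \<le> \<bar>h\<bar> * (1 + C)" using assms(1) by (simp add: divide_le_eq mult.commute)
  then show ?thesis using assms(4) by linarith
qed

locale fam =
  fixes e :: real and f v :: "real \<Rightarrow> real \<Rightarrow> real"
  assumes fam: "C1_family e f v"
begin

abbreviation "E \<equiv> {-e<..<e}"

lemma e_pos: "e > 0" using fam unfolding C1_family_def by auto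
lemma zE: "0 \<in> E" using e_pos by auto

lemma fU1: "t \<in> E \<Longrightarrow> U1 (f t)" using fam unfolding C1_family_def by auto
lemma vB1: "t \<in> E \<Longrightarrow> B1 (v t)" using fam unfolding C1_family_def by auto
lemma fB1: "t \<in> E \<Longrightarrow> B1 (f t)" using fU1 U1_B1 by auto
lemma dq: "t \<in> E \<Longrightarrow> ((\<lambda>h. normB1 (\<lambda>x. (f (t + h) x - f t x) / h - v t x)) \<longlongrightarrow> 0) (at 0)"
  using fam unfolding C1_family_def by auto
lemma vc: "t \<in> E \<Longrightarrow> ((\<lambda>s. normB1 (\<lambda>x. v s x - v t x)) \<longlongrightarrow> 0) (at t within E)"
  using fam unfolding C1_family_def by auto

lemma vcont: "t \<in> E \<Longrightarrow> continuous_on {-1..1} (v t)" using vB1 unfolding B1_def by auto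
lemma fcont: "t \<in> E \<Longrightarrow> continuous_on {-1..1} (f t)" using fB1 unfolding B1_def by auto

lemma dq_event: assumes "t \<in> E" "\<eta> > 0"
  shows "\<exists>d>0. \<forall>h. h \<noteq> 0 \<and> \<bar>h\<bar> < d \<longrightarrow> t + h \<in> E \<and>
     (\<forall>x\<in>{-1..1}. \<bar>(f (t + h) x - f t x) / h - v t x\<bar> \<le> \<eta>) \<and>
     (\<forall>x\<in>{-1..0}. \<bar>(DL (f (t + h)) x - DL (f t) x) / h - DL (v t) x\<bar> \<le> \<eta>) \<and>
     (\<forall>x\<in>{0..1}. \<bar>(DR (f (t + h)) x - DR (f t) x) / h - DR (v t) x\<bar> \<le> \<eta>)"
proof -
  have "eventually (\<lambda>h. normB1 (\<lambda>x. (f (t + h) x - f t x) / h - v t x) < \<eta>) (at 0)"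
    using dq[OF assms(1)] assms(2) by (auto dest: order_tendstoD(2))
  then obtain d1 where d1: "d1 > 0" "\<And>h. h \<noteq> 0 \<Longrightarrow> \<bar>h\<bar> < d1 \<Longrightarrow> normB1 (\<lambda>x. (f (t + h) x - f t x) / h - v t x) < \<eta>"
    unfolding eventually_at by (auto simp: dist_real_def)
  define d where "d = min d1 (e - \<bar>t\<bar>)"
  have "d > 0" using d1 assms unfolding d_def by auto
  moreover
  {
    fix h assume h: "h \<noteq> 0" "\<bar>h\<bar> < d"
    then have th: "t + h \<in> E" using assms unfolding d_def by auto
    have B: "B1 (\<lambda>x. (f (t + h) x - f t x) / h - v t x)"
      by (intro B1_quot fB1 vB1 th assms(1))
    have N: "normB1 (\<lambda>x. (f (t + h) x - f t x) / h - v t x) < \<eta>" using h d1 unfolding d_def by auto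
    have "(\<forall>x\<in>{-1..1}. \<bar>(f (t + h) x - f t x) / h - v t x\<bar> \<le> \<eta>)"
      using normB1_ge(1)[OF B] N by fastforce
    moreover have "(\<forall>x\<in>{-1..0}. \<bar>(DL (f (t + h)) x - DL (f t) x) / h - DL (v t) x\<bar> \<le> \<eta>)"
    proof
      fix x :: real assume x: "x \<in> {-1..0}"
      show "\<bar>(DL (f (t + h)) x - DL (f t) x) / h - DL (v t) x\<bar> \<le> \<eta>"
        using normB1_ge(2)[OF B x] N DL_quot[OF fB1[OF th] fB1[OF assms(1)] vB1[OF assms(1)] x, of h] by simp
    qed
    moreover have "(\<forall>x\<in>{0..1}. \<bar>(DR (f (t + h)) x - DR (f t) x) / h - DR (v t) x\<bar> \<le> \<eta>)"
    proof
      fix x :: real assume x: "x \<in> {0..1}"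
      show "\<bar>(DR (f (t + h)) x - DR (f t) x) / h - DR (v t) x\<bar> \<le> \<eta>"
        using normB1_ge(3)[OF B x] N DR_quot[OF fB1[OF th] fB1[OF assms(1)] vB1[OF assms(1)] x, of h] by simp
    qed
    ultimately have "t + h \<in> E \<and> (\<forall>x\<in>{-1..1}. \<bar>(f (t + h) x - f t x) / h - v t x\<bar> \<le> \<eta>) \<and>
     (\<forall>x\<in>{-1..0}. \<bar>(DL (f (t + h)) x - DL (f t) x) / h - DL (v t) x\<bar> \<le> \<eta>) \<and>
     (\<forall>x\<in>{0..1}. \<bar>(DR (f (t + h)) x - DR (f t) x) / h - DR (v t) x\<bar> \<le> \<eta>)" using th by blast
  }
  ultimately show ?thesis by blast
qed

lemma unif0: assumes "\<eta> > 0"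
  shows "\<exists>\<delta>>0. \<forall>t. \<bar>t\<bar> < \<delta> \<longrightarrow> t \<in> E \<and>
     (\<forall>x\<in>{-1..1}. \<bar>f t x - f 0 x\<bar> \<le> \<eta> \<and> \<bar>v t x - v 0 x\<bar> \<le> \<eta>) \<and>
     (\<forall>x\<in>{-1..0}. \<bar>DL (f t) x - DL (f 0) x\<bar> \<le> \<eta>) \<and>
     (\<forall>x\<in>{0..1}. \<bar>DR (f t) x - DR (f 0) x\<bar> \<le> \<eta>)"
proof -
  define C where "C = normB1 (v 0)"
  have C: "\<And>x. x \<in> {-1..1} \<Longrightarrow> \<bar>v 0 x\<bar> \<le> C" "\<And>x. x \<in> {-1..0} \<Longrightarrow> \<bar>DL (v 0) x\<bar> \<le> C"
    "\<And>x. x \<in> {0..1} \<Longrightarrow> \<bar>DR (v 0) x\<bar> \<le> C"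
    unfolding C_def using normB1_ge[OF vB1[OF zE]] by auto
  have C0: "C \<ge> 0" using C(1)[of 0] by auto
  obtain d1 where d1: "d1 > 0" "\<And>h. h \<noteq> 0 \<Longrightarrow> \<bar>h\<bar> < d1 \<Longrightarrow> 0 + h \<in> E \<and>
     (\<forall>x\<in>{-1..1}. \<bar>(f (0 + h) x - f 0 x) / h - v 0 x\<bar> \<le> 1) \<and>
     (\<forall>x\<in>{-1..0}. \<bar>(DL (f (0 + h)) x - DL (f 0) x) / h - DL (v 0) x\<bar> \<le> 1) \<and>
     (\<forall>x\<in>{0..1}. \<bar>(DR (f (0 + h)) x - DR (f 0) x) / h - DR (v 0) x\<bar> \<le> 1)"
    using dq_event[OF zE, of 1] by auto
  have "eventually (\<lambda>s. normB1 (\<lambda>x. v s x - v 0 x) < \<eta>) (at 0 within E)"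
    using vc[OF zE] assms by (auto dest: order_tendstoD(2))
  then obtain d2 where d2: "d2 > 0" "\<And>s. s \<in> E \<Longrightarrow> s \<noteq> 0 \<Longrightarrow> \<bar>s\<bar> < d2 \<Longrightarrow> normB1 (\<lambda>x. v s x - v 0 x) < \<eta>"
    unfolding eventually_at by (auto simp: dist_real_def)
  define \<delta> where "\<delta> = min d1 (min d2 (min e (\<eta> / (1 + C))))"
  have "\<delta> > 0" unfolding \<delta>_def using d1 d2 e_pos assms C0 by auto
  moreover
  {
    fix t :: real assume t: "\<bar>t\<bar> < \<delta>"
    have tE: "t \<in> E" using t unfolding \<delta>_def by auto
    have ht: "\<bar>t\<bar> * (1 + C) \<le> \<eta>"
    proof -
      have "\<bar>t\<bar> \<le> \<eta> / (1 + C)" using t unfolding \<delta>_def by auto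
      then show ?thesis using C0 by (simp add: le_divide_eq)
    qed
    have A: "(\<forall>x\<in>{-1..1}. \<bar>f t x - f 0 x\<bar> \<le> \<eta>) \<and>
     (\<forall>x\<in>{-1..0}. \<bar>DL (f t) x - DL (f 0) x\<bar> \<le> \<eta>) \<and>
     (\<forall>x\<in>{0..1}. \<bar>DR (f t) x - DR (f 0) x\<bar> \<le> \<eta>)"
    proof (cases "t = 0")
      case True then show ?thesis using assms by auto
    next
      case False
      have tt: "\<bar>t\<bar> < d1" using t unfolding \<delta>_def by auto
      note D = d1(2)[OF False tt]
      have "\<bar>f t x - f 0 x\<bar> \<le> \<eta>" if x: "x \<in> {-1..1}" for x
        by (rule quot_bound[OF False _ C(1)[OF x] ht]) (use D x in simp)
      moreover have "\<bar>DL (f t) x - DL (f 0) x\<bar> \<le> \<eta>" if x: "x \<in> {-1..0}" for x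
        by (rule quot_bound[OF False _ C(2)[OF x] ht]) (use D x in simp)
      moreover have "\<bar>DR (f t) x - DR (f 0) x\<bar> \<le> \<eta>" if x: "x \<in> {0..1}" for x
        by (rule quot_bound[OF False _ C(3)[OF x] ht]) (use D x in simp)
      ultimately show ?thesis by blast
    qed
    have B: "\<forall>x\<in>{-1..1}. \<bar>v t x - v 0 x\<bar> \<le> \<eta>"
    proof (cases "t = 0")
      case True then show ?thesis using assms by auto
    next
      case False
      have "normB1 (\<lambda>x. v t x - v 0 x) < \<eta>" using d2(2)[OF tE False] t unfolding \<delta>_def by auto
      then show ?thesis using normB1_ge(1)[OF B1_diff[OF vB1[OF tE] vB1[OF zE]]] by fastforce
    qed
    have "t \<in> E \<and>
     (\<forall>x\<in>{-1..1}. \<bar>f t x - f 0 x\<bar> \<le> \<eta> \<and> \<bar>v t x - v 0 x\<bar> \<le> \<eta>) \<and>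
     (\<forall>x\<in>{-1..0}. \<bar>DL (f t) x - DL (f 0) x\<bar> \<le> \<eta>) \<and>
     (\<forall>x\<in>{0..1}. \<bar>DR (f t) x - DR (f 0) x\<bar> \<le> \<eta>)" using tE A B by blast
  }
  ultimately show ?thesis by blast
qed

end


lemma seg_bound: assumes "C1_on c d g g'" "c \<le> a" "a \<le> b" "b \<le> d" "\<And>x. x \<in> {a..b} \<Longrightarrow> \<bar>g' x\<bar> \<le> K"
  shows "\<bar>g b - g a\<bar> \<le> K * (b - a)"
proof -
  have "g b - g a \<le> K * (b - a)" using assms by (intro C1_upper[OF assms(1-4)]) (simp add: abs_le_iff)
  moreover have "g b - g a \<ge> (-K) * (b - a)" using assms by (intro C1_lower[OF assms(1-4)]) (smt (verit) assms(5))
  ultimately show ?thesis by (simp add: abs_le_iff)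
qed

lemma U1_lip_le: assumes "U1 g" "\<And>x. x \<in> {-1..0} \<Longrightarrow> \<bar>DL g x\<bar> \<le> K" "\<And>x. x \<in> {0..1} \<Longrightarrow> \<bar>DR g x\<bar> \<le> K"
  "-1 \<le> u" "u \<le> w" "w \<le> 1"
  shows "\<bar>g w - g u\<bar> \<le> K * (w - u)"
proof -
  consider "w \<le> 0" | "0 \<le> u" | "u < 0" "0 < w" by linarith
  then show ?thesis
  proof cases
    case 1 then show ?thesis using assms by (intro seg_bound[OF U1_L[OF assms(1)]]) auto
  next
    case 2 then show ?thesis using assms by (intro seg_bound[OF U1_R[OF assms(1)]]) auto
  next
    case 3
    have "\<bar>g 0 - g u\<bar> \<le> K * (0 - u)" using assms 3 by (intro seg_bound[OF U1_L[OF assms(1)]]) auto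
    moreover have "\<bar>g w - g 0\<bar> \<le> K * (w - 0)" using assms 3 by (intro seg_bound[OF U1_R[OF assms(1)]]) auto
    ultimately show ?thesis by (simp add: algebra_simps)
  qed
qed

lemma U1_lip: assumes "U1 g" "\<And>x. x \<in> {-1..0} \<Longrightarrow> \<bar>DL g x\<bar> \<le> K" "\<And>x. x \<in> {0..1} \<Longrightarrow> \<bar>DR g x\<bar> \<le> K"
  "u \<in> {-1..1}" "w \<in> {-1..1}"
  shows "\<bar>g w - g u\<bar> \<le> K * \<bar>w - u\<bar>"
proof (cases "u \<le> w")
  case True then show ?thesis using U1_lip_le[OF assms(1-3), of u w] assms(4,5) by auto
next
  case False then show ?thesis using U1_lip_le[OF assms(1-3), of w u] assms(4,5) by (auto simp: abs_minus_commute)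
qed

context fam begin

lemma consts0:
  "\<exists>\<delta>0>0. \<exists>lam>1. \<exists>K V. \<forall>t. \<bar>t\<bar> < \<delta>0 \<longrightarrow> t \<in> E \<and>
     (\<forall>x\<in>{-1..0}. lam \<le> DL (f t) x \<and> DL (f t) x \<le> K) \<and>
     (\<forall>x\<in>{0..1}. -K \<le> DR (f t) x \<and> DR (f t) x \<le> -lam) \<and>
     (\<forall>x\<in>{-1..1}. \<bar>v t x\<bar> \<le> V)"
proof -
  have U: "U1 (f 0)" by (rule fU1[OF zE])
  define mL where "mL = (INF x\<in>{-1..0}. DL (f 0) x)"
  define MR where "MR = (SUP x\<in>{0..1}. DR (f 0) x)"
  have cL: "continuous_on {-1..0} (DL (f 0))" using U1_L[OF U] unfolding C1_on_def by auto
  have cR: "continuous_on {0..1} (DR (f 0))" using U1_R[OF U] unfolding C1_on_def by auto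
  have mL: "\<And>x. x \<in> {-1..0} \<Longrightarrow> DL (f 0) x \<ge> mL" unfolding mL_def by (rule cINF_lower[OF cont_bdd(1)[OF cL]])
  have MR: "\<And>x. x \<in> {0..1} \<Longrightarrow> DR (f 0) x \<le> MR" unfolding MR_def by (rule cSUP_upper[OF _ cont_bdd(2)[OF cR]])
  have mL1: "mL > 1" "MR < -1" using U unfolding U1_def mL_def MR_def by auto
  define l0 where "l0 = min mL (-MR)"
  have l0: "l0 > 1" using mL1 unfolding l0_def by auto
  define K0 where "K0 = normB1 (f 0)"
  define V0 where "V0 = normB1 (v 0)"
  have K0: "\<And>x. x \<in> {-1..0} \<Longrightarrow> \<bar>DL (f 0) x\<bar> \<le> K0" "\<And>x. x \<in> {0..1} \<Longrightarrow> \<bar>DR (f 0) x\<bar> \<le> K0"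
    unfolding K0_def using normB1_ge[OF fB1[OF zE]] by auto
  have V0: "\<And>x. x \<in> {-1..1} \<Longrightarrow> \<bar>v 0 x\<bar> \<le> V0" unfolding V0_def using normB1_ge[OF vB1[OF zE]] by auto
  define \<eta> where "\<eta> = (l0 - 1) / 2"
  have eta: "\<eta> > 0" using l0 unfolding \<eta>_def by auto
  obtain \<delta> where d: "\<delta> > 0" "\<And>t. \<bar>t\<bar> < \<delta> \<Longrightarrow> t \<in> E \<and>
     (\<forall>x\<in>{-1..1}. \<bar>f t x - f 0 x\<bar> \<le> \<eta> \<and> \<bar>v t x - v 0 x\<bar> \<le> \<eta>) \<and>
     (\<forall>x\<in>{-1..0}. \<bar>DL (f t) x - DL (f 0) x\<bar> \<le> \<eta>) \<and>
     (\<forall>x\<in>{0..1}. \<bar>DR (f t) x - DR (f 0) x\<bar> \<le> \<eta>)" using unif0[OF eta] by blast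
  have "l0 - \<eta> > 1" using l0 unfolding \<eta>_def by (simp add: field_simps)
  moreover
  {
    fix t :: real assume t: "\<bar>t\<bar> < \<delta>"
    note D = d(2)[OF t]
    have "(\<forall>x\<in>{-1..0}. l0 - \<eta> \<le> DL (f t) x \<and> DL (f t) x \<le> K0 + \<eta>)"
    proof
      fix x :: real assume x: "x \<in> {-1..0}"
      have "\<bar>DL (f t) x - DL (f 0) x\<bar> \<le> \<eta>" using D x by blast
      then show "l0 - \<eta> \<le> DL (f t) x \<and> DL (f t) x \<le> K0 + \<eta>" using mL[OF x] K0(1)[OF x] unfolding l0_def by auto
    qed
    moreover have "(\<forall>x\<in>{0..1}. -(K0 + \<eta>) \<le> DR (f t) x \<and> DR (f t) x \<le> -(l0 - \<eta>))"
    proof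
      fix x :: real assume x: "x \<in> {0..1}"
      have "\<bar>DR (f t) x - DR (f 0) x\<bar> \<le> \<eta>" using D x by blast
      then show "-(K0 + \<eta>) \<le> DR (f t) x \<and> DR (f t) x \<le> -(l0 - \<eta>)" using MR[OF x] K0(2)[OF x] unfolding l0_def by auto
    qed
    moreover have "(\<forall>x\<in>{-1..1}. \<bar>v t x\<bar> \<le> V0 + \<eta>)"
    proof
      fix x :: real assume x: "x \<in> {-1..1}"
      have "\<bar>v t x - v 0 x\<bar> \<le> \<eta>" using D x by blast
      then show "\<bar>v t x\<bar> \<le> V0 + \<eta>" using V0[OF x] by auto
    qed
    ultimately have "t \<in> E \<and> (\<forall>x\<in>{-1..0}. l0 - \<eta> \<le> DL (f t) x \<and> DL (f t) x \<le> K0 + \<eta>) \<and>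
     (\<forall>x\<in>{0..1}. -(K0 + \<eta>) \<le> DR (f t) x \<and> DR (f t) x \<le> -(l0 - \<eta>)) \<and>
     (\<forall>x\<in>{-1..1}. \<bar>v t x\<bar> \<le> V0 + \<eta>)" using D by blast
  }
  ultimately show ?thesis using d(1) by blast
qed

end


definition xo :: "(real \<Rightarrow> real \<Rightarrow> real) \<Rightarrow> real \<Rightarrow> nat \<Rightarrow> real" where
  "xo f t n = (f t ^^ n) 0"

primrec Dg :: "(real \<Rightarrow> real \<Rightarrow> real) \<Rightarrow> (real \<Rightarrow> real \<Rightarrow> real) \<Rightarrow> real \<Rightarrow> nat \<Rightarrow> real" where
  "Dg f v t 0 = 0"
| "Dg f v t (Suc n) = Df (f t) (xo f t n) * Dg f v t n + v t (xo f t n)"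

lemma xo_0[simp]: "xo f t 0 = 0" unfolding xo_def by simp
lemma xo_Suc: "xo f t (Suc n) = f t (xo f t n)" unfolding xo_def by simp

context fam begin

lemma xo_I: "t \<in> E \<Longrightarrow> xo f t n \<in> {-1..1}"
  unfolding xo_def by (rule U1_iter[OF fU1]) auto

lemma quot_part:
  assumes t0: "t0 \<in> E" and y: "(y \<longlongrightarrow> y0) (at t0)" and yI: "eventually (\<lambda>t. y t \<in> {-1..1}) (at t0)"
    and y0: "y0 \<in> {-1..1}"
  shows "((\<lambda>t. (f t (y t) - f t0 (y t)) / (t - t0)) \<longlongrightarrow> v t0 y0) (at t0)"
proof -
  have A: "((\<lambda>t. (f t (y t) - f t0 (y t)) / (t - t0) - v t0 (y t)) \<longlongrightarrow> 0) (at t0)"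
    unfolding tendsto_iff
  proof (intro allI impI)
    fix \<epsilon> :: real assume \<epsilon>: "\<epsilon> > 0"
    obtain d where d: "d > 0" "\<And>h. h \<noteq> 0 \<and> \<bar>h\<bar> < d \<longrightarrow> t0 + h \<in> E \<and>
     (\<forall>x\<in>{-1..1}. \<bar>(f (t0 + h) x - f t0 x) / h - v t0 x\<bar> \<le> \<epsilon>/2)"
      using dq_event[OF t0, of "\<epsilon>/2"] \<epsilon> by auto
    have ev: "eventually (\<lambda>t. t \<noteq> t0 \<and> dist t t0 < d) (at t0)"
      using d(1) unfolding eventually_at by auto
    show "eventually (\<lambda>t. dist ((f t (y t) - f t0 (y t)) / (t - t0) - v t0 (y t)) 0 < \<epsilon>) (at t0)"
      using ev yI
    proof eventually_elim
      case (elim t)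
      then have h: "t - t0 \<noteq> 0 \<and> \<bar>t - t0\<bar> < d" by (auto simp: dist_real_def)
      have "\<bar>(f (t0 + (t - t0)) (y t) - f t0 (y t)) / (t - t0) - v t0 (y t)\<bar> \<le> \<epsilon>/2"
        using d(2)[of "t - t0"] h elim by blast
      then show ?case using \<epsilon> by (simp add: dist_real_def)
    qed
  qed
  have "continuous (at y0 within {-1..1}) (v t0)"
    using vcont[OF t0] y0 continuous_on_eq_continuous_within by blast
  then have B: "((\<lambda>t. v t0 (y t)) \<longlongrightarrow> v t0 y0) (at t0)"
    by (rule continuous_within_tendsto_compose[OF _ yI y])
  have "((\<lambda>t. ((f t (y t) - f t0 (y t)) / (t - t0) - v t0 (y t)) + v t0 (y t)) \<longlongrightarrow> 0 + v t0 y0) (at t0)"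
    by (rule tendsto_add[OF A B])
  then show ?thesis by simp
qed


lemma yS_event: assumes "t0 \<in> E" "(y \<longlongrightarrow> y0) (at t0)" "\<forall>t\<in>E. y t \<in> {-1..1}"
  shows "eventually (\<lambda>t. y t \<in> {-1..1}) (at t0)"
proof -
  have "eventually (\<lambda>t. t \<in> E) (at t0)" by (rule eventually_at_in_open'[OF _ assms(1)]) auto
  then show ?thesis by eventually_elim (use assms(3) in auto)
qed

lemma step_deriv:
  assumes t0: "t0 \<in> E" and yd: "(y has_real_derivative D) (at t0)" and yI: "\<forall>t\<in>E. y t \<in> {-1..1}"
    and y0: "y t0 \<noteq> 0"
  shows "((\<lambda>t. f t (y t)) has_real_derivative Df (f t0) (y t0) * D + v t0 (y t0)) (at t0)"
proof -
  let ?y0 = "y t0"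
  have yc: "(y \<longlongrightarrow> ?y0) (at t0)" using DERIV_isCont[OF yd] by (simp add: isCont_def)
  have yev: "eventually (\<lambda>t. y t \<in> {-1..1}) (at t0)" by (rule yS_event[OF t0 yc yI])
  have y0I: "?y0 \<in> {-1..1}" using yI t0 by auto
  have U: "U1 (f t0)" by (rule fU1[OF t0])
  obtain S where S: "(f t0 has_real_derivative Df (f t0) ?y0) (at ?y0 within S)"
      "eventually (\<lambda>t. y t \<in> S) (at t0)"
  proof (cases "?y0 < 0")
    case True
    have "eventually (\<lambda>t. y t < 0) (at t0)" using yc True by (auto dest: order_tendstoD)
    then have "eventually (\<lambda>t. y t \<in> {-1..0}) (at t0)" using yev by eventually_elim auto
    moreover have "(f t0 has_real_derivative Df (f t0) ?y0) (at ?y0 within {-1..0})"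
      using U1_L[OF U] True y0I unfolding C1_on_def Df_def by auto
    ultimately show ?thesis using that by blast
  next
    case False
    then have F: "?y0 > 0" using y0 by auto
    have "eventually (\<lambda>t. y t > 0) (at t0)" using yc F by (auto dest: order_tendstoD)
    then have "eventually (\<lambda>t. y t \<in> {0..1}) (at t0)" using yev by eventually_elim auto
    moreover have "(f t0 has_real_derivative Df (f t0) ?y0) (at ?y0 within {0..1})"
      using U1_R[OF U] F y0I unfolding C1_on_def Df_def by auto
    ultimately show ?thesis using that by blast
  qed
  obtain \<phi> where phi: "\<And>z. f t0 z - f t0 ?y0 = \<phi> z * (z - ?y0)" "continuous (at ?y0 within S) \<phi>"
      "\<phi> ?y0 = Df (f t0) ?y0"
    using S(1) unfolding DERIV_caratheodory_within by blast
  have P: "((\<lambda>t. \<phi> (y t)) \<longlongrightarrow> Df (f t0) ?y0) (at t0)"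
    using continuous_within_tendsto_compose[OF phi(2) S(2) yc] phi(3) by simp
  have Q: "((\<lambda>t. (y t - ?y0) / (t - t0)) \<longlongrightarrow> D) (at t0)"
    using yd unfolding has_field_derivative_iff by simp
  have A: "((\<lambda>t. (f t (y t) - f t0 (y t)) / (t - t0)) \<longlongrightarrow> v t0 ?y0) (at t0)"
    by (rule quot_part[OF t0 yc yev y0I])
  have L: "((\<lambda>t. (f t (y t) - f t0 (y t)) / (t - t0) + \<phi> (y t) * ((y t - ?y0) / (t - t0)))
     \<longlongrightarrow> v t0 ?y0 + Df (f t0) ?y0 * D) (at t0)"
    by (intro tendsto_add tendsto_mult A P Q)
  have "((\<lambda>t. (f t (y t) - f t0 (y t0)) / (t - t0)) \<longlongrightarrow> v t0 ?y0 + Df (f t0) ?y0 * D) (at t0)"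
  proof (rule Lim_transform_eventually[OF L])
    show "eventually (\<lambda>t. (f t (y t) - f t0 (y t)) / (t - t0) + \<phi> (y t) * ((y t - ?y0) / (t - t0)) =
       (f t (y t) - f t0 (y t0)) / (t - t0)) (at t0)"
    proof (rule always_eventually, rule allI)
      fix t
      have "f t (y t) - f t0 ?y0 = (f t (y t) - f t0 (y t)) + \<phi> (y t) * (y t - ?y0)"
        using phi(1)[of "y t"] by simp
      then have "(f t (y t) - f t0 ?y0) / (t - t0) = ((f t (y t) - f t0 (y t)) + \<phi> (y t) * (y t - ?y0)) / (t - t0)"
        by (rule arg_cong)
      then show "(f t (y t) - f t0 (y t)) / (t - t0) + \<phi> (y t) * ((y t - ?y0) / (t - t0)) =
       (f t (y t) - f t0 (y t0)) / (t - t0)"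
        by (simp only: add_divide_distrib times_divide_eq_right)
    qed
  qed
  then show ?thesis unfolding has_field_derivative_iff by (simp add: add.commute)
qed

lemma step0_deriv:
  assumes t0: "t0 \<in> E"
  shows "((\<lambda>t. f t 0) has_real_derivative v t0 0) (at t0)"
proof -
  have "((\<lambda>t. (f t ((\<lambda>_. 0) t) - f t0 ((\<lambda>_. 0) t)) / (t - t0)) \<longlongrightarrow> v t0 0) (at t0)"
    by (rule quot_part[OF t0]) auto
  then show ?thesis unfolding has_field_derivative_iff by simp
qed

lemma orbit_deriv:
  assumes t0: "t0 \<in> E" and nz: "\<And>k. 1 \<le> k \<Longrightarrow> k < n \<Longrightarrow> xo f t0 k \<noteq> 0"
  shows "((\<lambda>t. xo f t n) has_real_derivative Dg f v t0 n) (at t0)"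
  using nz
proof (induction n)
  case 0 then show ?case by simp
next
  case (Suc n)
  have IH: "((\<lambda>t. xo f t n) has_real_derivative Dg f v t0 n) (at t0)"
    using Suc.IH Suc.prems by auto
  show ?case
  proof (cases n)
    case 0
    then show ?thesis using step0_deriv[OF t0] by (simp add: xo_Suc)
  next
    case (Suc m)
    then have "xo f t0 n \<noteq> 0" using Suc.prems[of n] by auto
    from step_deriv[OF t0 IH _ this] xo_I
    show ?thesis by (simp add: xo_Suc)
  qed
qed

end


primrec Dgen :: "(real \<Rightarrow> real \<Rightarrow> real) \<Rightarrow> (real \<Rightarrow> real \<Rightarrow> real) \<Rightarrow> real \<Rightarrow> real \<Rightarrow> real \<Rightarrow> nat \<Rightarrow> real" where
  "Dgen f v t y d 0 = d"
| "Dgen f v t y d (Suc n) = Df (f t) ((f t ^^ n) y) * Dgen f v t y d n + v t ((f t ^^ n) y)"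

lemma Dg_Dgen: "Dg f v t n = Dgen f v t 0 0 n"
  by (induction n) (simp_all add: xo_def)

lemma close_tendsto:
  assumes "\<And>\<epsilon>. \<epsilon> > 0 \<Longrightarrow> eventually (\<lambda>a. \<bar>G a - H a\<bar> < \<epsilon>) F" "(H \<longlongrightarrow> (L::real)) F"
  shows "(G \<longlongrightarrow> L) F"
proof -
  have "((\<lambda>a. G a - H a) \<longlongrightarrow> 0) F"
    unfolding tendsto_iff using assms(1) by (simp add: dist_real_def)
  from tendsto_add[OF this assms(2)] show ?thesis by simp
qed

context fam begin

lemma T_E: "(T \<longlongrightarrow> 0) F \<Longrightarrow> eventually (\<lambda>a. T a \<in> E) F"
  using topological_tendstoD[of T 0 F E] zE by auto

lemma T_small: fixes T :: "'a \<Rightarrow> real" assumes "(T \<longlongrightarrow> 0) F" "\<delta> > 0" shows "eventually (\<lambda>a. \<bar>T a\<bar> < \<delta>) F"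
proof -
  have "eventually (\<lambda>a. dist (T a) 0 < \<delta>) F" using assms(1) assms(2) tendstoD by blast
  then show ?thesis by (simp add: dist_real_def)
qed

lemma lim_fv:
  assumes T: "(T \<longlongrightarrow> 0) F" and Y: "(Y \<longlongrightarrow> y0) F" and YI: "eventually (\<lambda>a. Y a \<in> {-1..1}) F"
    and y0: "y0 \<in> {-1..1}"
  shows "((\<lambda>a. f (T a) (Y a)) \<longlongrightarrow> f 0 y0) F" "((\<lambda>a. v (T a) (Y a)) \<longlongrightarrow> v 0 y0) F"
proof -
  have cf: "continuous (at y0 within {-1..1}) (f 0)"
    using fcont[OF zE] y0 continuous_on_eq_continuous_within by blast
  have cv: "continuous (at y0 within {-1..1}) (v 0)"
    using vcont[OF zE] y0 continuous_on_eq_continuous_within by blast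
  have Hf: "((\<lambda>a. f 0 (Y a)) \<longlongrightarrow> f 0 y0) F" by (rule continuous_within_tendsto_compose[OF cf YI Y])
  have Hv: "((\<lambda>a. v 0 (Y a)) \<longlongrightarrow> v 0 y0) F" by (rule continuous_within_tendsto_compose[OF cv YI Y])
  show "((\<lambda>a. f (T a) (Y a)) \<longlongrightarrow> f 0 y0) F"
  proof (rule close_tendsto[OF _ Hf])
    fix \<epsilon> :: real assume \<epsilon>: "\<epsilon> > 0"
    obtain \<delta> where d: "\<delta> > 0" "\<And>t. \<bar>t\<bar> < \<delta> \<Longrightarrow> (\<forall>x\<in>{-1..1}. \<bar>f t x - f 0 x\<bar> \<le> \<epsilon>/2 \<and> \<bar>v t x - v 0 x\<bar> \<le> \<epsilon>/2)"
      using unif0[of "\<epsilon>/2"] \<epsilon> by auto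
    show "eventually (\<lambda>a. \<bar>f (T a) (Y a) - f 0 (Y a)\<bar> < \<epsilon>) F"
      using T_small[OF T d(1)] YI
    proof eventually_elim
      case (elim a) then show ?case using d(2)[of "T a"] \<epsilon> by fastforce
    qed
  qed
  show "((\<lambda>a. v (T a) (Y a)) \<longlongrightarrow> v 0 y0) F"
  proof (rule close_tendsto[OF _ Hv])
    fix \<epsilon> :: real assume \<epsilon>: "\<epsilon> > 0"
    obtain \<delta> where d: "\<delta> > 0" "\<And>t. \<bar>t\<bar> < \<delta> \<Longrightarrow> (\<forall>x\<in>{-1..1}. \<bar>f t x - f 0 x\<bar> \<le> \<epsilon>/2 \<and> \<bar>v t x - v 0 x\<bar> \<le> \<epsilon>/2)"
      using unif0[of "\<epsilon>/2"] \<epsilon> by auto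
    show "eventually (\<lambda>a. \<bar>v (T a) (Y a) - v 0 (Y a)\<bar> < \<epsilon>) F"
      using T_small[OF T d(1)] YI
    proof eventually_elim
      case (elim a) then show ?case using d(2)[of "T a"] \<epsilon> by fastforce
    qed
  qed
qed

lemma lim_Df:
  assumes T: "(T \<longlongrightarrow> 0) F" and Y: "(Y \<longlongrightarrow> y0) F" and YI: "eventually (\<lambda>a. Y a \<in> {-1..1}) F"
    and y0: "y0 \<in> {-1..1}" "y0 \<noteq> 0"
  shows "((\<lambda>a. Df (f (T a)) (Y a)) \<longlongrightarrow> Df (f 0) y0) F"
proof (cases "y0 < 0")
  case True
  have y0L: "y0 \<in> {-1..0}" using y0 True by auto
  have "eventually (\<lambda>a. Y a < 0) F" using Y True by (auto dest: order_tendstoD)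
  then have YL: "eventually (\<lambda>a. Y a \<in> {-1..0}) F" using YI by eventually_elim auto
  have c: "continuous (at y0 within {-1..0}) (DL (f 0))"
    using U1_L[OF fU1[OF zE]] y0L continuous_on_eq_continuous_within unfolding C1_on_def by blast
  have H: "((\<lambda>a. DL (f 0) (Y a)) \<longlongrightarrow> DL (f 0) y0) F" by (rule continuous_within_tendsto_compose[OF c YL Y])
  have "((\<lambda>a. DL (f (T a)) (Y a)) \<longlongrightarrow> DL (f 0) y0) F"
  proof (rule close_tendsto[OF _ H])
    fix \<epsilon> :: real assume \<epsilon>: "\<epsilon> > 0"
    obtain \<delta> where d: "\<delta> > 0" "\<And>t. \<bar>t\<bar> < \<delta> \<Longrightarrow> (\<forall>x\<in>{-1..0}. \<bar>DL (f t) x - DL (f 0) x\<bar> \<le> \<epsilon>/2)"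
      using unif0[of "\<epsilon>/2"] \<epsilon> by auto
    show "eventually (\<lambda>a. \<bar>DL (f (T a)) (Y a) - DL (f 0) (Y a)\<bar> < \<epsilon>) F"
      using T_small[OF T d(1)] YL
    proof eventually_elim
      case (elim a) then show ?case using d(2)[of "T a"] \<epsilon> by fastforce
    qed
  qed
  moreover have "eventually (\<lambda>a. DL (f (T a)) (Y a) = Df (f (T a)) (Y a)) F"
    using YL by eventually_elim (auto simp: Df_def)
  ultimately show ?thesis using True by (auto simp: Df_def intro: Lim_transform_eventually)
next
  case False
  then have F0: "y0 > 0" using y0 by auto
  have y0R: "y0 \<in> {0..1}" using y0 F0 by auto
  have "eventually (\<lambda>a. Y a > 0) F" using Y F0 by (auto dest: order_tendstoD)
  then have YR: "eventually (\<lambda>a. Y a \<in> {0<..1}) F" using YI by eventually_elim auto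
  then have YR': "eventually (\<lambda>a. Y a \<in> {0..1}) F" by eventually_elim auto
  have c: "continuous (at y0 within {0..1}) (DR (f 0))"
    using U1_R[OF fU1[OF zE]] y0R continuous_on_eq_continuous_within unfolding C1_on_def by blast
  have H: "((\<lambda>a. DR (f 0) (Y a)) \<longlongrightarrow> DR (f 0) y0) F" by (rule continuous_within_tendsto_compose[OF c YR' Y])
  have "((\<lambda>a. DR (f (T a)) (Y a)) \<longlongrightarrow> DR (f 0) y0) F"
  proof (rule close_tendsto[OF _ H])
    fix \<epsilon> :: real assume \<epsilon>: "\<epsilon> > 0"
    obtain \<delta> where d: "\<delta> > 0" "\<And>t. \<bar>t\<bar> < \<delta> \<Longrightarrow> (\<forall>x\<in>{0..1}. \<bar>DR (f t) x - DR (f 0) x\<bar> \<le> \<epsilon>/2)"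
      using unif0[of "\<epsilon>/2"] \<epsilon> by auto
    show "eventually (\<lambda>a. \<bar>DR (f (T a)) (Y a) - DR (f 0) (Y a)\<bar> < \<epsilon>) F"
      using T_small[OF T d(1)] YR'
    proof eventually_elim
      case (elim a) then show ?case using d(2)[of "T a"] \<epsilon> by fastforce
    qed
  qed
  moreover have "eventually (\<lambda>a. DR (f (T a)) (Y a) = Df (f (T a)) (Y a)) F"
    using YR by eventually_elim (auto simp: Df_def)
  ultimately show ?thesis using F0 by (auto simp: Df_def intro: Lim_transform_eventually)
qed

lemma orbI_ev: assumes T: "(T \<longlongrightarrow> 0) F" and YI: "eventually (\<lambda>a. Y a \<in> {-1..1}) F"
  shows "eventually (\<lambda>a. (f (T a) ^^ k) (Y a) \<in> {-1..1}) F"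
  using T_E[OF T] YI by eventually_elim (rule U1_iter[OF fU1])

lemma lim_orb:
  assumes T: "(T \<longlongrightarrow> 0) F" and Y: "(Y \<longlongrightarrow> y0) F" and YI: "eventually (\<lambda>a. Y a \<in> {-1..1}) F"
    and y0: "y0 \<in> {-1..1}"
  shows "((\<lambda>a. (f (T a) ^^ k) (Y a)) \<longlongrightarrow> (f 0 ^^ k) y0) F"
proof (induction k)
  case 0 then show ?case using Y by simp
next
  case (Suc k)
  have "((\<lambda>a. f (T a) ((f (T a) ^^ k) (Y a))) \<longlongrightarrow> f 0 ((f 0 ^^ k) y0)) F"
    by (rule lim_fv(1)[OF T Suc.IH orbI_ev[OF T YI] U1_iter[OF fU1[OF zE] y0]])
  then show ?case by simp
qed

lemma lim_Dgen:
  assumes T: "(T \<longlongrightarrow> 0) F" and Y: "(Y \<longlongrightarrow> y0) F" and YI: "eventually (\<lambda>a. Y a \<in> {-1..1}) F"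
    and y0: "y0 \<in> {-1..1}" and nz: "\<And>j. 1 \<le> j \<Longrightarrow> j < k \<Longrightarrow> (f 0 ^^ j) y0 \<noteq> 0"
  shows "((\<lambda>a. Dgen f v (T a) (Y a) 0 k) \<longlongrightarrow> Dgen f v 0 y0 0 k) F"
  using nz
proof (induction k)
  case 0 then show ?case by simp
next
  case (Suc k)
  have IH: "((\<lambda>a. Dgen f v (T a) (Y a) 0 k) \<longlongrightarrow> Dgen f v 0 y0 0 k) F" using Suc by auto
  have V: "((\<lambda>a. v (T a) ((f (T a) ^^ k) (Y a))) \<longlongrightarrow> v 0 ((f 0 ^^ k) y0)) F"
    by (rule lim_fv(2)[OF T lim_orb[OF T Y YI y0] orbI_ev[OF T YI] U1_iter[OF fU1[OF zE] y0]])
  show ?case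
  proof (cases k)
    case 0 then show ?thesis using V by simp
  next
    case (Suc m)
    then have "(f 0 ^^ k) y0 \<noteq> 0" using Suc.prems[of k] by auto
    then have D: "((\<lambda>a. Df (f (T a)) ((f (T a) ^^ k) (Y a))) \<longlongrightarrow> Df (f 0) ((f 0 ^^ k) y0)) F"
      by (intro lim_Df[OF T lim_orb[OF T Y YI y0] orbI_ev[OF T YI] U1_iter[OF fU1[OF zE] y0]])
    show ?thesis by (simp, intro tendsto_add tendsto_mult D IH V)
  qed
qed

end


lemma Df_gt1: assumes "U1 g" "x \<in> {-1..1}" shows "\<bar>Df g x\<bar> > 1"
proof (cases "x \<le> 0")
  case True then have "DL g x > 1" using U1_DL[OF assms(1)] assms(2) by auto
  then show ?thesis using True by (simp add: Df_def)
next
  case False then have "DR g x < -1" using U1_DR[OF assms(1)] assms(2) by auto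
  then show ?thesis using False by (simp add: Df_def)
qed

lemma Dfn_Suc: "Dfn g (Suc m) y = Dfn g m y * Df g ((g ^^ m) y)"
  unfolding Dfn_def by simp

lemma Dfn_nz: assumes "U1 g" "y \<in> {-1..1}" shows "Dfn g j y \<noteq> 0"
proof -
  have "\<And>i. Df g ((g ^^ i) y) \<noteq> 0"
  proof -
    fix i show "Df g ((g ^^ i) y) \<noteq> 0" using Df_gt1[OF assms(1) U1_iter[OF assms], of i] by auto
  qed
  then show ?thesis unfolding Dfn_def by auto
qed

lemma Dfn_lower: assumes "\<And>i. i < j \<Longrightarrow> \<bar>Df g ((g ^^ i) y)\<bar> \<ge> lam" "lam \<ge> 0"
  shows "\<bar>Dfn g j y\<bar> \<ge> lam ^ j"
proof -
  have "lam ^ j = (\<Prod>i<j. lam)" by simp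
  also have "\<dots> \<le> (\<Prod>i<j. \<bar>Df g ((g ^^ i) y)\<bar>)" using assms by (intro prod_mono) auto
  also have "\<dots> = \<bar>Dfn g j y\<bar>" unfolding Dfn_def by (simp add: abs_prod)
  finally show ?thesis .
qed

lemma xo_shift: "(g ^^ j) (g 0) = (g ^^ Suc j) 0"
  by (simp add: funpow_swap1)

context fam begin

lemma Dg_rel: assumes t: "t \<in> E"
  shows "Dg f v t (Suc m) = Dfn (f t) m (f t 0) * (\<Sum>j<Suc m. v t (xo f t j) / Dfn (f t) j (f t 0))"
proof (induction m)
  case 0 then show ?case by (simp add: Dfn_def)
next
  case (Suc m)
  have nz: "Dfn (f t) (Suc m) (f t 0) \<noteq> 0"
    by (rule Dfn_nz[OF fU1[OF t] U1_maps[OF fU1[OF t]]]) auto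
  have DS: "Dfn (f t) (Suc m) (f t 0) = Dfn (f t) m (f t 0) * Df (f t) (xo f t (Suc m))"
    by (simp add: Dfn_Suc xo_def xo_shift del: funpow.simps)
  have "Dg f v t (Suc (Suc m)) = Df (f t) (xo f t (Suc m)) * Dg f v t (Suc m) + v t (xo f t (Suc m))"
    by simp
  also have "\<dots> = Dfn (f t) (Suc m) (f t 0) * (\<Sum>j<Suc m. v t (xo f t j) / Dfn (f t) j (f t 0))
      + v t (xo f t (Suc m))" using Suc.IH DS by simp
  also have "\<dots> = Dfn (f t) (Suc m) (f t 0) * (\<Sum>j<Suc (Suc m). v t (xo f t j) / Dfn (f t) j (f t 0))"
    using nz by (simp add: algebra_simps)
  finally show ?case .
qed

lemma growth:
  assumes lam: "lam > 1" and B: "B * (lam - 1) = V"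
    and Dfb: "\<And>k. \<bar>Df (f t) (xo f t k)\<bar> \<ge> lam" and vb: "\<And>k. \<bar>v t (xo f t k)\<bar> \<le> V"
    and st: "\<bar>Dg f v t N\<bar> \<ge> B + 1" and B0: "B \<ge> 0"
  shows "\<bar>Dg f v t (N + m)\<bar> \<ge> lam ^ m + B"
proof (induction m)
  case 0 then show ?case using st by simp
next
  case (Suc m)
  let ?a = "Df (f t) (xo f t (N + m))" and ?d = "Dg f v t (N + m)" and ?w = "v t (xo f t (N + m))"
  have "\<bar>?a * ?d\<bar> \<ge> lam * (lam ^ m + B)"
    unfolding abs_mult using Dfb[of "N+m"] Suc.IH lam B0 by (intro mult_mono) auto
  then have "\<bar>?a * ?d + ?w\<bar> \<ge> lam * (lam ^ m + B) - V" using vb[of "N+m"] by linarith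
  moreover have "lam * (lam ^ m + B) - V = lam ^ Suc m + B" using B by (simp add: algebra_simps)
  ultimately show ?case by simp
qed

end


context fam begin

lemma bounds0:
  obtains \<delta>0 lam K V where "\<delta>0 > 0" "lam > 1" "V \<ge> 0"
    "\<And>t. \<bar>t\<bar> < \<delta>0 \<Longrightarrow> t \<in> E"
    "\<And>t x. \<bar>t\<bar> < \<delta>0 \<Longrightarrow> x \<in> {-1..0} \<Longrightarrow> lam \<le> DL (f t) x \<and> DL (f t) x \<le> K"
    "\<And>t x. \<bar>t\<bar> < \<delta>0 \<Longrightarrow> x \<in> {0..1} \<Longrightarrow> -K \<le> DR (f t) x \<and> DR (f t) x \<le> -lam"
    "\<And>t x. \<bar>t\<bar> < \<delta>0 \<Longrightarrow> x \<in> {-1..1} \<Longrightarrow> \<bar>v t x\<bar> \<le> V"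
    "\<And>t x. \<bar>t\<bar> < \<delta>0 \<Longrightarrow> x \<in> {-1..1} \<Longrightarrow> lam \<le> \<bar>Df (f t) x\<bar> \<and> \<bar>Df (f t) x\<bar> \<le> K"
proof -
  obtain \<delta>0 lam K V where c: "\<delta>0 > 0" "lam > 1" "\<And>t. \<bar>t\<bar> < \<delta>0 \<Longrightarrow> t \<in> E \<and>
     (\<forall>x\<in>{-1..0}. lam \<le> DL (f t) x \<and> DL (f t) x \<le> K) \<and>
     (\<forall>x\<in>{0..1}. -K \<le> DR (f t) x \<and> DR (f t) x \<le> -lam) \<and>
     (\<forall>x\<in>{-1..1}. \<bar>v t x\<bar> \<le> V)" using consts0 by blast
  have V: "V \<ge> 0" using c(3)[of 0] c(1) by fastforce
  have Dfb: "lam \<le> \<bar>Df (f t) x\<bar> \<and> \<bar>Df (f t) x\<bar> \<le> K" if "\<bar>t\<bar> < \<delta>0" "x \<in> {-1..1}" for t x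
  proof (cases "x \<le> 0")
    case True
    then have "lam \<le> DL (f t) x \<and> DL (f t) x \<le> K" using c(3)[OF that(1)] that(2) by auto
    then show ?thesis using True c(2) by (auto simp: Df_def)
  next
    case False
    then have "-K \<le> DR (f t) x \<and> DR (f t) x \<le> -lam" using c(3)[OF that(1)] that(2) by auto
    then show ?thesis using False c(2) by (auto simp: Df_def)
  qed
  show ?thesis
    by (rule that[OF c(1,2) V]) (use c(3) Dfb in auto)
qed

lemma partB:
  assumes np: "\<not> crit_periodic (f 0)" and J0: "J (f 0) (v 0) \<noteq> 0" and \<delta>: "\<delta> > 0"
  shows "\<exists>t. t \<in> E \<and> \<bar>t\<bar> < \<delta> \<and> crit_periodic (f t)"
proof (rule ccontr)
  assume H: "\<not> ?thesis"
  obtain \<delta>0 lam K V where c: "\<delta>0 > 0" "lam > 1" "V \<ge> 0"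
    "\<And>t. \<bar>t\<bar> < \<delta>0 \<Longrightarrow> t \<in> E"
    "\<And>t x. \<bar>t\<bar> < \<delta>0 \<Longrightarrow> x \<in> {-1..1} \<Longrightarrow> \<bar>v t x\<bar> \<le> V"
    "\<And>t x. \<bar>t\<bar> < \<delta>0 \<Longrightarrow> x \<in> {-1..1} \<Longrightarrow> lam \<le> \<bar>Df (f t) x\<bar> \<and> \<bar>Df (f t) x\<bar> \<le> K"
    using bounds0 by metis
  define B where "B = V / (lam - 1)"
  have B: "B * (lam - 1) = V" "B \<ge> 0" using c(2,3) unfolding B_def by auto
  define a where "a = (\<lambda>i. v 0 (xo f 0 i) / Dfn (f 0) i (f 0 0))"
  have Jdef: "J (f 0) (v 0) = suminf a" using np unfolding J_def a_def xo_def by simp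
  have ab: "norm (a i) \<le> V * (1 / lam) ^ i" for i
  proof -
    have "\<bar>Dfn (f 0) i (f 0 0)\<bar> \<ge> lam ^ i"
    proof (rule Dfn_lower)
      fix j assume "j < i"
      have "((f 0) ^^ j) (f 0 0) \<in> {-1..1}" by (rule U1_iter[OF fU1[OF zE] U1_maps[OF fU1[OF zE]]]) auto
      then show "\<bar>Df (f 0) ((f 0 ^^ j) (f 0 0))\<bar> \<ge> lam" using c(6)[of 0] c(1) by auto
    qed (use c(2) in auto)
    moreover have "\<bar>v 0 (xo f 0 i)\<bar> \<le> V" using c(5)[of 0] c(1) xo_I[OF zE] by auto
    moreover have "lam ^ i > 0" using c(2) by auto
    ultimately have "\<bar>v 0 (xo f 0 i)\<bar> / \<bar>Dfn (f 0) i (f 0 0)\<bar> \<le> V / lam ^ i"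
      using c(3) by (intro frac_le) auto
    then show ?thesis unfolding a_def by (simp add: abs_divide power_divide)
  qed
  have sg: "summable (\<lambda>i. V * (1 / lam) ^ i)"
    by (intro summable_mult summable_geometric) (use c(2) in auto)
  have sa: "summable a" by (rule summable_comparison_test[OF _ sg]) (use ab in auto)
  have S: "(\<lambda>n. \<Sum>i<n. a i) \<longlonglongrightarrow> J (f 0) (v 0)" using summable_LIMSEQ[OF sa] Jdef by simp
  have "eventually (\<lambda>n. \<bar>\<Sum>i<n. a i\<bar> > \<bar>J (f 0) (v 0)\<bar> / 2) sequentially"
    using tendsto_rabs[OF S] J0 by (intro order_tendstoD(1)) auto
  then obtain N1 where N1: "\<And>n. n \<ge> N1 \<Longrightarrow> \<bar>\<Sum>i<n. a i\<bar> > \<bar>J (f 0) (v 0)\<bar> / 2"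
    unfolding eventually_sequentially by blast
  obtain m0 where m0: "(B + 2) * 2 / \<bar>J (f 0) (v 0)\<bar> < lam ^ m0" using real_arch_pow[OF c(2)] by blast
  define N where "N = Suc (N1 + m0)"
  have DgN: "Dg f v 0 N = Dfn (f 0) (N1 + m0) (f 0 0) * (\<Sum>i<N. a i)"
    unfolding N_def a_def by (rule Dg_rel[OF zE])
  have "\<bar>Dfn (f 0) (N1 + m0) (f 0 0)\<bar> \<ge> lam ^ (N1 + m0)"
  proof (rule Dfn_lower)
    fix j assume "j < N1 + m0"
    have "((f 0) ^^ j) (f 0 0) \<in> {-1..1}" by (rule U1_iter[OF fU1[OF zE] U1_maps[OF fU1[OF zE]]]) auto
    then show "\<bar>Df (f 0) ((f 0 ^^ j) (f 0 0))\<bar> \<ge> lam" using c(6)[of 0] c(1) by auto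
  qed (use c(2) in auto)
  moreover have "lam ^ (N1 + m0) \<ge> lam ^ m0" using c(2) by (intro power_increasing) auto
  moreover have "\<bar>\<Sum>i<N. a i\<bar> > \<bar>J (f 0) (v 0)\<bar> / 2" by (rule N1) (simp add: N_def)
  ultimately have "\<bar>Dg f v 0 N\<bar> \<ge> lam ^ m0 * (\<bar>J (f 0) (v 0)\<bar> / 2)"
    unfolding DgN abs_mult by (intro mult_mono) auto
  moreover have "lam ^ m0 * (\<bar>J (f 0) (v 0)\<bar> / 2) > B + 2"
    using m0 J0 by (simp add: field_simps)
  ultimately have DN: "\<bar>Dg f v 0 N\<bar> > B + 2" by linarith
  have nz0: "(f 0 ^^ j) 0 \<noteq> 0" if "1 \<le> j" for j
  proof -
    have "j > 0" using that by auto
    then show ?thesis using np unfolding crit_periodic_def by blast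
  qed
  have "((\<lambda>t. Dgen f v ((\<lambda>t. t) t) ((\<lambda>_. 0) t) 0 N) \<longlongrightarrow> Dgen f v 0 0 0 N) (at 0)"
    by (rule lim_Dgen) (use nz0 in auto)
  then have "((\<lambda>t. Dg f v t N) \<longlongrightarrow> Dg f v 0 N) (at 0)" by (simp add: Dg_Dgen)
  then have "eventually (\<lambda>t. \<bar>Dg f v t N\<bar> > B + 1) (at 0)"
    using DN by (intro order_tendstoD(1)[OF tendsto_rabs]) auto
  then obtain \<delta>1 where d1: "\<delta>1 > 0" "\<And>t. t \<noteq> 0 \<Longrightarrow> \<bar>t\<bar> < \<delta>1 \<Longrightarrow> \<bar>Dg f v t N\<bar> > B + 1"
    unfolding eventually_at by (auto simp: dist_real_def)
  have d1': "\<bar>Dg f v t N\<bar> \<ge> B + 1" if "\<bar>t\<bar> < \<delta>1" for t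
    using d1(2)[of t] DN that by (cases "t = 0") auto
  define r where "r = min \<delta> (min \<delta>0 \<delta>1) / 2"
  have r: "r > 0" "r < \<delta>" "r < \<delta>0" "r < \<delta>1" using \<delta> c(1) d1(1) unfolding r_def by auto
  have tE: "t \<in> E" if "\<bar>t\<bar> \<le> r" for t using c(4) that r by auto
  have np_t: "xo f t k \<noteq> 0" if "\<bar>t\<bar> \<le> r" "1 \<le> k" for t k
  proof
    assume "xo f t k = 0"
    moreover have "k > 0" using that by auto
    ultimately have "crit_periodic (f t)" unfolding crit_periodic_def xo_def by blast
    then show False using H tE[OF that(1)] that(1) r by auto
  qed
  obtain m where m: "1 / r < lam ^ m" using real_arch_pow[OF c(2)] by blast
  define n where "n = N + m"
  have der: "\<And>t. -r \<le> t \<Longrightarrow> t \<le> r \<Longrightarrow> ((\<lambda>t. xo f t n) has_real_derivative Dg f v t n) (at t)"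
  proof -
    fix t assume t: "-r \<le> t" "t \<le> r"
    then have ta: "\<bar>t\<bar> \<le> r" by auto
    show "((\<lambda>t. xo f t n) has_real_derivative Dg f v t n) (at t)"
      by (rule orbit_deriv[OF tE[OF ta]]) (use np_t[OF ta] in auto)
  qed
  obtain z where z: "-r < z" "z < r" "xo f r n - xo f (-r) n = (r - (-r)) * Dg f v z n"
    using MVT2[of "-r" r "\<lambda>t. xo f t n" "\<lambda>t. Dg f v t n"] der r(1) by auto
  have zb: "\<bar>z\<bar> < \<delta>0" "\<bar>z\<bar> < \<delta>1" using z r by auto
  have "\<bar>Dg f v z (N + m)\<bar> \<ge> lam ^ m + B"
  proof (rule growth[OF c(2) B(1)])
    show "\<And>k. lam \<le> \<bar>Df (f z) (xo f z k)\<bar>" using c(6)[OF zb(1)] xo_I[OF c(4)[OF zb(1)]] by auto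
    show "\<And>k. \<bar>v z (xo f z k)\<bar> \<le> V" using c(5)[OF zb(1)] xo_I[OF c(4)[OF zb(1)]] by auto
    show "B + 1 \<le> \<bar>Dg f v z N\<bar>" by (rule d1'[OF zb(2)])
  qed (use B in auto)
  then have "\<bar>Dg f v z n\<bar> > 1 / r" using m B(2) unfolding n_def by linarith
  then have "2 * r * \<bar>Dg f v z n\<bar> > 2 * r * (1 / r)" using r(1) by (intro mult_strict_left_mono) auto
  then have big: "\<bar>xo f r n - xo f (-r) n\<bar> > 2" using z(3) r(1) by (simp add: abs_mult)
  have "xo f r n \<in> {-1..1}" "xo f (-r) n \<in> {-1..1}" using xo_I tE r(1) by auto
  then show False using big by auto
qed

end


lemma expand_L: assumes U: "U1 g" and a: "a \<in> {-1..0}" and b: "b \<in> {-1..0}"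
  and D: "\<And>x. min a b \<le> x \<Longrightarrow> x \<le> max a b \<Longrightarrow> DL g x \<ge> L"
  shows "\<bar>g a - g b\<bar> \<ge> L * \<bar>a - b\<bar>"
proof (cases "a \<le> b")
  case True
  have "g b - g a \<ge> L * (b - a)"
    by (rule C1_lower[OF U1_L[OF U]]) (use a b True D in auto)
  then show ?thesis using True by auto
next
  case False
  have "g a - g b \<ge> L * (a - b)"
    by (rule C1_lower[OF U1_L[OF U]]) (use a b False D in auto)
  then show ?thesis using False by auto
qed

lemma expand_R: assumes U: "U1 g" and a: "a \<in> {0..1}" and b: "b \<in> {0..1}"
  and D: "\<And>x. min a b \<le> x \<Longrightarrow> x \<le> max a b \<Longrightarrow> DR g x \<le> -L"
  shows "\<bar>g a - g b\<bar> \<ge> L * \<bar>a - b\<bar>"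
proof (cases "a \<le> b")
  case True
  have "g b - g a \<le> (-L) * (b - a)"
    by (rule C1_upper[OF U1_R[OF U]]) (use a b True D in auto)
  then show ?thesis using True by auto
next
  case False
  have "g a - g b \<le> (-L) * (a - b)"
    by (rule C1_upper[OF U1_R[OF U]]) (use a b False D in auto)
  then show ?thesis using False by auto
qed

context fam begin

lemma block_est:
  fixes p :: nat and t y \<epsilon> \<rho>0 :: real and \<rho> :: "nat \<Rightarrow> real"
  defines "\<mu> \<equiv> min \<bar>DR (f 0) 0\<bar> \<bar>DL (f 0) 0\<bar>"
  assumes tE: "t \<in> E" and \<epsilon>: "0 < \<epsilon>" "\<epsilon> < 1"
    and H1L: "\<And>x. x \<in> {-1..0} \<Longrightarrow> \<bar>DL (f t) x - DL (f 0) x\<bar> \<le> \<epsilon>/2"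
    and H1R: "\<And>x. x \<in> {0..1} \<Longrightarrow> \<bar>DR (f t) x - DR (f 0) x\<bar> \<le> \<epsilon>/2"
    and H0L: "\<And>x. x \<in> {-1..0} \<Longrightarrow> \<bar>x\<bar> < \<rho>0 \<Longrightarrow> \<bar>DL (f 0) x - DL (f 0) 0\<bar> \<le> \<epsilon>/2"
    and H0R: "\<And>x. x \<in> {0..1} \<Longrightarrow> \<bar>x\<bar> < \<rho>0 \<Longrightarrow> \<bar>DR (f 0) x - DR (f 0) 0\<bar> \<le> \<epsilon>/2"
    and y: "\<bar>y\<bar> < \<rho>0" "y \<in> {-1..1}"
    and Hj: "\<And>i. i < p - 1 \<Longrightarrow> \<rho> i < \<bar>xo f 0 (Suc i)\<bar> \<and>
        (\<forall>x\<in>{-1..1}. \<bar>x - xo f 0 (Suc i)\<bar> < \<rho> i \<longrightarrow> \<bar>Df (f 0) x - Df (f 0) (xo f 0 (Suc i))\<bar> \<le> \<epsilon>/2) \<and>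
        \<bar>(f t ^^ Suc i) y - xo f 0 (Suc i)\<bar> < \<rho> i \<and> \<bar>(f t ^^ Suc i) 0 - xo f 0 (Suc i)\<bar> < \<rho> i"
    and p: "p \<ge> 1"
  shows "\<bar>\<Prod>j<p. Df (f t) ((f t ^^ j) y)\<bar> \<ge> (\<mu> - \<epsilon>) * (\<Prod>i<p - 1. \<bar>Df (f 0) (xo f 0 (Suc i))\<bar> - \<epsilon>)"
    and "\<bar>(f t ^^ p) y - (f t ^^ p) 0\<bar> \<ge> (\<mu> - \<epsilon>) * (\<Prod>i<p - 1. \<bar>Df (f 0) (xo f 0 (Suc i))\<bar> - \<epsilon>) * \<bar>y\<bar>"
proof -
  have U: "U1 (f t)" by (rule fU1[OF tE])
  have U0: "U1 (f 0)" by (rule fU1[OF zE])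
  have HD: "\<bar>Df (f t) x - Df (f 0) x\<bar> \<le> \<epsilon>/2" if "x \<in> {-1..1}" for x
    using H1L[of x] H1R[of x] that by (cases "x \<le> 0") (auto simp: Df_def)
  have DL0: "DL (f 0) 0 > 1" using U1_DL[OF U0] by auto
  have DR0: "DR (f 0) 0 < -1" using U1_DR[OF U0] by auto
  have mu1: "\<mu> > 1" using DL0 DR0 unfolding \<mu>_def by auto
  have A: "\<bar>Df (f t) y\<bar> \<ge> \<mu> - \<epsilon> \<and> \<bar>f t y - f t 0\<bar> \<ge> (\<mu> - \<epsilon>) * \<bar>y\<bar>"
  proof (cases "y \<le> 0")
    case True
    have b: "DL (f t) x \<ge> \<mu> - \<epsilon>" if "min y 0 \<le> x" "x \<le> max y 0" for x
    proof -
      have x: "x \<in> {-1..0}" "\<bar>x\<bar> < \<rho>0" using that True y by auto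
      have m: "\<mu> \<le> DL (f 0) 0" unfolding \<mu>_def using DL0 by auto
      show ?thesis using H1L[OF x(1)] H0L[OF x] m unfolding abs_le_iff by linarith
    qed
    have "\<bar>f t y - f t 0\<bar> \<ge> (\<mu> - \<epsilon>) * \<bar>y - 0\<bar>"
      by (rule expand_L[OF U _ _ b]) (use True y in auto)
    moreover have "Df (f t) y \<ge> \<mu> - \<epsilon>" using b[of y] True by (auto simp: Df_def)
    ultimately show ?thesis using mu1 \<epsilon> by auto
  next
    case False
    have b: "DR (f t) x \<le> -(\<mu> - \<epsilon>)" if "min y 0 \<le> x" "x \<le> max y 0" for x
    proof -
      have x: "x \<in> {0..1}" "\<bar>x\<bar> < \<rho>0" using that False y by auto
      have m: "\<mu> \<le> - DR (f 0) 0" unfolding \<mu>_def using DR0 by auto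
      show ?thesis using H1R[OF x(1)] H0R[OF x] m unfolding abs_le_iff by linarith
    qed
    have "\<bar>f t y - f t 0\<bar> \<ge> (\<mu> - \<epsilon>) * \<bar>y - 0\<bar>"
      by (rule expand_R[OF U _ _ b]) (use False y in auto)
    moreover have "Df (f t) y \<le> -(\<mu> - \<epsilon>)" using b[of y] False by (auto simp: Df_def)
    ultimately show ?thesis using mu1 \<epsilon> by auto
  qed
  define c where "c = (\<lambda>i. \<bar>Df (f 0) (xo f 0 (Suc i))\<bar> - \<epsilon>)"
  have c0: "c i > 0" for i
    using Df_gt1[OF U0 xo_I[OF zE], of "Suc i"] \<epsilon> unfolding c_def by linarith
  have B: "\<bar>Df (f t) ((f t ^^ Suc i) y)\<bar> \<ge> c i \<and>
      \<bar>f t ((f t ^^ Suc i) y) - f t ((f t ^^ Suc i) 0)\<bar> \<ge> c i * \<bar>(f t ^^ Suc i) y - (f t ^^ Suc i) 0\<bar>"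
    if i: "i < p - 1" for i
  proof -
    let ?z = "xo f 0 (Suc i)" and ?u = "(f t ^^ Suc i) y" and ?w = "(f t ^^ Suc i) 0"
    note h = Hj[OF i]
    have uI: "?u \<in> {-1..1}" by (rule U1_iter[OF U y(2)])
    have wI: "?w \<in> {-1..1}" by (rule U1_iter[OF U]) auto
    have seg: "\<bar>x - ?z\<bar> < \<rho> i \<and> x \<in> {-1..1}" if "min ?u ?w \<le> x" "x \<le> max ?u ?w" for x
      using that h uI wI by (auto simp: abs_less_iff)
    have cl: "\<bar>Df (f t) x - Df (f 0) ?z\<bar> \<le> \<epsilon>" if "min ?u ?w \<le> x" "x \<le> max ?u ?w" for x
    proof -
      have "\<bar>Df (f t) x - Df (f 0) x\<bar> \<le> \<epsilon>/2" using HD seg[OF that] by auto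
      moreover have "\<bar>Df (f 0) x - Df (f 0) ?z\<bar> \<le> \<epsilon>/2" using h seg[OF that] by auto
      ultimately show ?thesis by linarith
    qed
    have zI: "?z \<in> {-1..1}" by (rule xo_I[OF zE])
    show ?thesis
    proof (cases "?z < 0")
      case True
      have DLz: "DL (f 0) ?z > 1" using U1_DL[OF U0] True zI by auto
      have neg: "x < 0" if "min ?u ?w \<le> x" "x \<le> max ?u ?w" for x
        using seg[OF that] h True by (auto simp: abs_less_iff)
      have b: "DL (f t) x \<ge> c i" if "min ?u ?w \<le> x" "x \<le> max ?u ?w" for x
        using cl[OF that] neg[OF that] True DLz unfolding c_def by (auto simp: Df_def)
      have uL: "?u \<in> {-1..0}" using neg[of ?u] uI by auto
      have wL: "?w \<in> {-1..0}" using neg[of ?w] wI by auto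
      have "\<bar>f t ?u - f t ?w\<bar> \<ge> c i * \<bar>?u - ?w\<bar>"
        by (rule expand_L[OF U uL wL b])
      moreover have "\<bar>Df (f t) ?u\<bar> \<ge> c i" using b[of ?u] neg[of ?u] c0[of i] by (auto simp: Df_def)
      ultimately show ?thesis by auto
    next
      case False
      have "\<rho> i > 0" using h by (meson abs_ge_zero le_less_trans)
      then have "\<bar>?z\<bar> > 0" using h by linarith
      then have F: "?z > 0" using False by linarith
      have DRz: "DR (f 0) ?z < -1" using U1_DR[OF U0] F zI by auto
      have pos: "x > 0" if "min ?u ?w \<le> x" "x \<le> max ?u ?w" for x
        using seg[OF that] h F by (auto simp: abs_less_iff)
      have b: "DR (f t) x \<le> - c i" if "min ?u ?w \<le> x" "x \<le> max ?u ?w" for x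
        using cl[OF that] pos[OF that] F DRz unfolding c_def by (auto simp: Df_def)
      have uR: "?u \<in> {0..1}" using pos[of ?u] uI by auto
      have wR: "?w \<in> {0..1}" using pos[of ?w] wI by auto
      have "\<bar>f t ?u - f t ?w\<bar> \<ge> c i * \<bar>?u - ?w\<bar>"
        by (rule expand_R[OF U uR wR b])
      moreover have "\<bar>Df (f t) ?u\<bar> \<ge> c i" using b[of ?u] pos[of ?u] c0[of i] by (auto simp: Df_def)
      ultimately show ?thesis by auto
    qed
  qed
  obtain p' where p': "p = Suc p'" using p by (cases p) auto
  have "\<bar>\<Prod>j<p. Df (f t) ((f t ^^ j) y)\<bar> = \<bar>Df (f t) y\<bar> * (\<Prod>i<p'. \<bar>Df (f t) ((f t ^^ Suc i) y)\<bar>)"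
    unfolding p' prod.lessThan_Suc_shift by (simp add: abs_mult abs_prod)
  also have "\<dots> \<ge> (\<mu> - \<epsilon>) * (\<Prod>i<p'. c i)"
    using A B c0 mu1 \<epsilon> p' by (intro mult_mono prod_mono) (auto intro: less_imp_le prod_nonneg)
  finally show "\<bar>\<Prod>j<p. Df (f t) ((f t ^^ j) y)\<bar> \<ge> (\<mu> - \<epsilon>) * (\<Prod>i<p - 1. \<bar>Df (f 0) (xo f 0 (Suc i))\<bar> - \<epsilon>)"
    unfolding c_def p' by simp
  have ind: "\<bar>(f t ^^ Suc k) y - (f t ^^ Suc k) 0\<bar> \<ge> (\<mu> - \<epsilon>) * (\<Prod>i<k. c i) * \<bar>y\<bar>" if "k \<le> p'" for k
    using that
  proof (induction k)
    case 0 then show ?case using A by simp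
  next
    case (Suc k)
    have k: "k < p - 1" using Suc.prems p' by auto
    have "(\<mu> - \<epsilon>) * (\<Prod>i<Suc k. c i) * \<bar>y\<bar> = c k * ((\<mu> - \<epsilon>) * (\<Prod>i<k. c i) * \<bar>y\<bar>)" by simp
    also have "\<dots> \<le> c k * \<bar>(f t ^^ Suc k) y - (f t ^^ Suc k) 0\<bar>"
      using Suc c0[of k] by (intro mult_left_mono) auto
    also have "\<dots> \<le> \<bar>(f t ^^ Suc (Suc k)) y - (f t ^^ Suc (Suc k)) 0\<bar>" using B[OF k] by simp
    finally show ?case .
  qed
  show "\<bar>(f t ^^ p) y - (f t ^^ p) 0\<bar> \<ge> (\<mu> - \<epsilon>) * (\<Prod>i<p - 1. \<bar>Df (f 0) (xo f 0 (Suc i))\<bar> - \<epsilon>) * \<bar>y\<bar>"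
    using ind[of p'] unfolding c_def p' by simp
qed

end


lemma cont_at_le: fixes g :: "real \<Rightarrow> real" assumes "continuous_on S g" "x0 \<in> S" "\<epsilon> > 0"
  shows "\<exists>\<rho>>0. \<forall>x\<in>S. \<bar>x - x0\<bar> < \<rho> \<longrightarrow> \<bar>g x - g x0\<bar> \<le> (\<epsilon>::real)"
proof -
  obtain d where "d > 0" "\<forall>x'\<in>S. dist x' x0 < d \<longrightarrow> dist (g x') (g x0) < \<epsilon>"
    using assms unfolding continuous_on_iff by blast
  then show ?thesis by (auto simp: dist_real_def intro!: exI[of _ d] less_imp_le)
qed

context fam begin

lemma rho_exists: assumes z: "z \<in> {-1..1}" "z \<noteq> 0" and \<epsilon>: "\<epsilon> > 0"
  shows "\<exists>\<rho>>0. \<rho> < \<bar>z\<bar> \<and> (\<forall>x\<in>{-1..1}. \<bar>x - z\<bar> < \<rho> \<longrightarrow> \<bar>Df (f 0) x - Df (f 0) z\<bar> \<le> \<epsilon>)"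
proof (cases "z < 0")
  case True
  have c: "continuous_on {-1..0} (DL (f 0))" using U1_L[OF fU1[OF zE]] unfolding C1_on_def by auto
  obtain d where d: "d > 0" "\<forall>x\<in>{-1..0}. \<bar>x - z\<bar> < d \<longrightarrow> \<bar>DL (f 0) x - DL (f 0) z\<bar> \<le> \<epsilon>"
    using cont_at_le[OF c _ \<epsilon>, of z] z True by auto
  define \<rho> where "\<rho> = min d (\<bar>z\<bar> / 2)"
  have "\<rho> > 0" "\<rho> < \<bar>z\<bar>" using d True unfolding \<rho>_def by auto
  moreover have "\<forall>x\<in>{-1..1}. \<bar>x - z\<bar> < \<rho> \<longrightarrow> \<bar>Df (f 0) x - Df (f 0) z\<bar> \<le> \<epsilon>"
  proof (intro ballI impI)
    fix x :: real assume x: "x \<in> {-1..1}" "\<bar>x - z\<bar> < \<rho>"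
    then have "\<bar>x - z\<bar> < \<bar>z\<bar> / 2" unfolding \<rho>_def by auto
    then have "x - z < \<bar>z\<bar> / 2" by (metis abs_less_iff)
    moreover have "\<bar>z\<bar> = - z" using True by simp
    ultimately have "x < 0" using True by linarith
    then show "\<bar>Df (f 0) x - Df (f 0) z\<bar> \<le> \<epsilon>" using d x True unfolding \<rho>_def by (auto simp: Df_def)
  qed
  ultimately show ?thesis by blast
next
  case False
  then have F: "z > 0" using z by auto
  have c: "continuous_on {0..1} (DR (f 0))" using U1_R[OF fU1[OF zE]] unfolding C1_on_def by auto
  obtain d where d: "d > 0" "\<forall>x\<in>{0..1}. \<bar>x - z\<bar> < d \<longrightarrow> \<bar>DR (f 0) x - DR (f 0) z\<bar> \<le> \<epsilon>"
    using cont_at_le[OF c _ \<epsilon>, of z] z F by auto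
  define \<rho> where "\<rho> = min d (\<bar>z\<bar> / 2)"
  have "\<rho> > 0" "\<rho> < \<bar>z\<bar>" using d F unfolding \<rho>_def by auto
  moreover have "\<forall>x\<in>{-1..1}. \<bar>x - z\<bar> < \<rho> \<longrightarrow> \<bar>Df (f 0) x - Df (f 0) z\<bar> \<le> \<epsilon>"
  proof (intro ballI impI)
    fix x :: real assume x: "x \<in> {-1..1}" "\<bar>x - z\<bar> < \<rho>"
    then have "\<bar>x - z\<bar> < \<bar>z\<bar> / 2" unfolding \<rho>_def by auto
    then have "z - x < \<bar>z\<bar> / 2" by (metis abs_less_iff minus_diff_eq)
    moreover have "\<bar>z\<bar> = z" using F by simp
    ultimately have "x > 0" using F by linarith
    then show "\<bar>Df (f 0) x - Df (f 0) z\<bar> \<le> \<epsilon>" using d x F unfolding \<rho>_def by (auto simp: Df_def)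
  qed
  ultimately show ?thesis by blast
qed

lemma local_block:
  fixes p :: nat and Lam \<eta> :: real
  defines "\<mu> \<equiv> min \<bar>DR (f 0) 0\<bar> \<bar>DL (f 0) 0\<bar>"
  assumes p: "p \<ge> 1" and nz: "\<And>j. 1 \<le> j \<Longrightarrow> j < p \<Longrightarrow> xo f 0 j \<noteq> 0"
    and Lam: "Lam < \<mu> * (\<Prod>i<p - 1. \<bar>Df (f 0) (xo f 0 (Suc i))\<bar>)" and \<eta>: "\<eta> > 0"
  shows "\<exists>d>0. \<forall>t y. t \<noteq> 0 \<longrightarrow> \<bar>t\<bar> < d \<longrightarrow> \<bar>y\<bar> < d \<longrightarrow> y \<in> {-1..1} \<longrightarrow> t \<in> E \<and>
    (\<forall>j. 1 \<le> j \<and> j < p \<longrightarrow> (f t ^^ j) y \<noteq> 0) \<and>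
    Lam \<le> \<bar>\<Prod>j<p. Df (f t) ((f t ^^ j) y)\<bar> \<and>
    \<bar>Dgen f v t y 0 p - Dgen f v 0 0 0 p\<bar> \<le> \<eta> \<and>
    Lam * \<bar>y\<bar> \<le> \<bar>(f t ^^ p) y - (f t ^^ p) 0\<bar>"
proof -
  define Pr where "Pr = (\<lambda>\<epsilon>. (\<mu> - \<epsilon>) * (\<Prod>i<p - 1. \<bar>Df (f 0) (xo f 0 (Suc i))\<bar> - \<epsilon>))"
  have "(Pr \<longlongrightarrow> Pr 0) (at_right 0)"
    unfolding Pr_def by (intro tendsto_intros)
  then have "eventually (\<lambda>\<epsilon>. Pr \<epsilon> > Lam) (at_right 0)"
    using Lam unfolding Pr_def by (intro order_tendstoD(1)) auto
  then obtain b where b: "b > 0" "\<And>\<epsilon>. \<epsilon> > 0 \<Longrightarrow> \<epsilon> < b \<Longrightarrow> Pr \<epsilon> > Lam"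
    unfolding eventually_at_right_field by auto
  define \<epsilon> where "\<epsilon> = min b 1 / 2"
  have \<epsilon>: "\<epsilon> > 0" "\<epsilon> < 1" "Pr \<epsilon> > Lam" using b unfolding \<epsilon>_def by auto
  have e2: "\<epsilon>/2 > 0" using \<epsilon> by auto
  obtain \<delta>e where de: "\<delta>e > 0" "\<And>t. \<bar>t\<bar> < \<delta>e \<Longrightarrow> t \<in> E \<and>
     (\<forall>x\<in>{-1..1}. \<bar>f t x - f 0 x\<bar> \<le> \<epsilon>/2 \<and> \<bar>v t x - v 0 x\<bar> \<le> \<epsilon>/2) \<and>
     (\<forall>x\<in>{-1..0}. \<bar>DL (f t) x - DL (f 0) x\<bar> \<le> \<epsilon>/2) \<and>
     (\<forall>x\<in>{0..1}. \<bar>DR (f t) x - DR (f 0) x\<bar> \<le> \<epsilon>/2)"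
    using unif0[OF e2] by blast
  have cL: "continuous_on {-1..0} (DL (f 0))" using U1_L[OF fU1[OF zE]] unfolding C1_on_def by auto
  have cR: "continuous_on {0..1} (DR (f 0))" using U1_R[OF fU1[OF zE]] unfolding C1_on_def by auto
  obtain r1 where r1: "r1 > 0" "\<forall>x\<in>{-1..0}. \<bar>x - 0\<bar> < r1 \<longrightarrow> \<bar>DL (f 0) x - DL (f 0) 0\<bar> \<le> \<epsilon>/2"
    using cont_at_le[OF cL _ e2, of 0] by auto
  obtain r2 where r2: "r2 > 0" "\<forall>x\<in>{0..1}. \<bar>x - 0\<bar> < r2 \<longrightarrow> \<bar>DR (f 0) x - DR (f 0) 0\<bar> \<le> \<epsilon>/2"
    using cont_at_le[OF cR _ e2, of 0] by auto
  define \<rho>0 where "\<rho>0 = min r1 r2"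
  have \<rho>0: "\<rho>0 > 0" using r1 r2 unfolding \<rho>0_def by auto
  have "\<forall>i. \<exists>r. i < p - 1 \<longrightarrow> r > 0 \<and> r < \<bar>xo f 0 (Suc i)\<bar> \<and>
     (\<forall>x\<in>{-1..1}. \<bar>x - xo f 0 (Suc i)\<bar> < r \<longrightarrow> \<bar>Df (f 0) x - Df (f 0) (xo f 0 (Suc i))\<bar> \<le> \<epsilon>/2)"
  proof
    fix i
    show "\<exists>r. i < p - 1 \<longrightarrow> r > 0 \<and> r < \<bar>xo f 0 (Suc i)\<bar> \<and>
     (\<forall>x\<in>{-1..1}. \<bar>x - xo f 0 (Suc i)\<bar> < r \<longrightarrow> \<bar>Df (f 0) x - Df (f 0) (xo f 0 (Suc i))\<bar> \<le> \<epsilon>/2)"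
    proof (cases "i < p - 1")
      case True
      then have "xo f 0 (Suc i) \<noteq> 0" using nz[of "Suc i"] by auto
      then show ?thesis using rho_exists[OF xo_I[OF zE] _ e2] by blast
    qed auto
  qed
  then obtain \<rho> where \<rho>: "\<And>i. i < p - 1 \<Longrightarrow> \<rho> i > 0 \<and> \<rho> i < \<bar>xo f 0 (Suc i)\<bar> \<and>
     (\<forall>x\<in>{-1..1}. \<bar>x - xo f 0 (Suc i)\<bar> < \<rho> i \<longrightarrow> \<bar>Df (f 0) x - Df (f 0) (xo f 0 (Suc i))\<bar> \<le> \<epsilon>/2)"
    by metis
  define F where "F = at ((0::real), (0::real)) within (UNIV \<times> {-1..1})"
  have T: "(fst \<longlongrightarrow> 0) F" unfolding F_def
    using tendsto_fst[OF tendsto_ident_at[of "(0::real,0::real)" "UNIV \<times> {-1..1}"]] by simp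
  have Y: "(snd \<longlongrightarrow> 0) F" unfolding F_def
    using tendsto_snd[OF tendsto_ident_at[of "(0::real,0::real)" "UNIV \<times> {-1..1}"]] by simp
  have Z: "((\<lambda>a. (0::real)) \<longlongrightarrow> 0) F" by simp
  have YI: "eventually (\<lambda>a. snd a \<in> {-1..1}) F"
    unfolding F_def eventually_at_filter by (auto intro: always_eventually)
  have ZI: "eventually (\<lambda>a. (0::real) \<in> {-1..1}) F" by simp
  have 0: "(0::real) \<in> {-1..1}" by simp
  have E1: "eventually (\<lambda>a. \<bar>fst a\<bar> < \<delta>e) F" by (rule T_small[OF T de(1)])
  have E2: "eventually (\<lambda>a. \<bar>snd a\<bar> < \<rho>0) F" by (rule T_small[OF Y \<rho>0])
  have E3: "eventually (\<lambda>a. \<forall>i\<in>{..<p - 1}. \<bar>(f (fst a) ^^ Suc i) (snd a) - xo f 0 (Suc i)\<bar> < \<rho> i \<and>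
       \<bar>(f (fst a) ^^ Suc i) 0 - xo f 0 (Suc i)\<bar> < \<rho> i) F"
  proof (rule eventually_ball_finite, simp, intro ballI)
    fix i assume i: "i \<in> {..<p - 1}"
    have r: "\<rho> i > 0" using \<rho>[of i] i by auto
    have l1: "((\<lambda>a. (f (fst a) ^^ Suc i) (snd a)) \<longlongrightarrow> xo f 0 (Suc i)) F"
      using lim_orb[OF T Y YI 0, of "Suc i"] unfolding xo_def .
    have l2: "((\<lambda>a. (f (fst a) ^^ Suc i) ((\<lambda>a. 0) a)) \<longlongrightarrow> xo f 0 (Suc i)) F"
      using lim_orb[OF T Z ZI 0, of "Suc i"] unfolding xo_def .
    have "eventually (\<lambda>a. dist ((f (fst a) ^^ Suc i) (snd a)) (xo f 0 (Suc i)) < \<rho> i) F"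
      using l1 r tendstoD by blast
    moreover have "eventually (\<lambda>a. dist ((f (fst a) ^^ Suc i) 0) (xo f 0 (Suc i)) < \<rho> i) F"
      using l2 r tendstoD by fastforce
    ultimately show "eventually (\<lambda>a. \<bar>(f (fst a) ^^ Suc i) (snd a) - xo f 0 (Suc i)\<bar> < \<rho> i \<and>
       \<bar>(f (fst a) ^^ Suc i) 0 - xo f 0 (Suc i)\<bar> < \<rho> i) F"
      by eventually_elim (auto simp: dist_real_def)
  qed
  have E4: "eventually (\<lambda>a. \<forall>j\<in>{1..<p}. (f (fst a) ^^ j) (snd a) \<noteq> 0) F"
  proof (rule eventually_ball_finite, simp, intro ballI)
    fix j assume j: "j \<in> {1..<p}"
    have l1: "((\<lambda>a. (f (fst a) ^^ j) (snd a)) \<longlongrightarrow> xo f 0 j) F"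
      using lim_orb[OF T Y YI 0, of j] unfolding xo_def .
    show "eventually (\<lambda>a. (f (fst a) ^^ j) (snd a) \<noteq> 0) F"
      by (rule tendsto_imp_eventually_ne[OF l1]) (use nz j in auto)
  qed
  have nz0: "(f 0 ^^ j) 0 \<noteq> 0" if "1 \<le> j" "j < p" for j using nz[OF that] unfolding xo_def .
  have E5: "eventually (\<lambda>a. \<bar>Dgen f v (fst a) (snd a) 0 p - Dgen f v 0 0 0 p\<bar> < \<eta>) F"
  proof -
    have "((\<lambda>a. Dgen f v (fst a) (snd a) 0 p) \<longlongrightarrow> Dgen f v 0 0 0 p) F"
      by (rule lim_Dgen[OF T Y YI 0 nz0])
    then show ?thesis using \<eta> tendstoD by (fastforce simp: dist_real_def)
  qed
  have "eventually (\<lambda>a. snd a \<in> {-1..1} \<and> \<bar>fst a\<bar> < \<delta>e \<and> \<bar>snd a\<bar> < \<rho>0 \<and>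
     (\<forall>i\<in>{..<p - 1}. \<bar>(f (fst a) ^^ Suc i) (snd a) - xo f 0 (Suc i)\<bar> < \<rho> i \<and>
       \<bar>(f (fst a) ^^ Suc i) 0 - xo f 0 (Suc i)\<bar> < \<rho> i) \<and>
     (\<forall>j\<in>{1..<p}. (f (fst a) ^^ j) (snd a) \<noteq> 0) \<and>
     \<bar>Dgen f v (fst a) (snd a) 0 p - Dgen f v 0 0 0 p\<bar> < \<eta>) F"
    using YI E1 E2 E3 E4 E5 by eventually_elim auto
  then obtain d where d: "d > 0" "\<And>t y. (t, y) \<in> UNIV \<times> {-1..1} \<Longrightarrow> (t, y) \<noteq> (0, 0) \<Longrightarrow>
     dist (t, y) (0, 0) < d \<Longrightarrow>
     y \<in> {-1..1} \<and> \<bar>t\<bar> < \<delta>e \<and> \<bar>y\<bar> < \<rho>0 \<and>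
     (\<forall>i\<in>{..<p - 1}. \<bar>(f t ^^ Suc i) y - xo f 0 (Suc i)\<bar> < \<rho> i \<and>
       \<bar>(f t ^^ Suc i) 0 - xo f 0 (Suc i)\<bar> < \<rho> i) \<and>
     (\<forall>j\<in>{1..<p}. (f t ^^ j) y \<noteq> 0) \<and>
     \<bar>Dgen f v t y 0 p - Dgen f v 0 0 0 p\<bar> < \<eta>"
    unfolding F_def eventually_at by auto
  have "d/2 > 0" using d by auto
  moreover
  {
    fix t y :: real assume ty: "t \<noteq> 0" "\<bar>t\<bar> < d/2" "\<bar>y\<bar> < d/2" "y \<in> {-1..1}"
    have "dist (t, y) (0, 0) \<le> norm t + norm y"
      using norm_Pair_le[of t y] by (simp add: dist_norm)
    also have "\<dots> < d" using ty by simp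
    finally have "dist (t, y) (0, 0) < d" .
    moreover have "(t, y) \<in> UNIV \<times> {-1..1}" "(t, y) \<noteq> (0, 0)" using ty by auto
    ultimately have P: "y \<in> {-1..1} \<and> \<bar>t\<bar> < \<delta>e \<and> \<bar>y\<bar> < \<rho>0 \<and>
     (\<forall>i\<in>{..<p - 1}. \<bar>(f t ^^ Suc i) y - xo f 0 (Suc i)\<bar> < \<rho> i \<and>
       \<bar>(f t ^^ Suc i) 0 - xo f 0 (Suc i)\<bar> < \<rho> i) \<and>
     (\<forall>j\<in>{1..<p}. (f t ^^ j) y \<noteq> 0) \<and>
     \<bar>Dgen f v t y 0 p - Dgen f v 0 0 0 p\<bar> < \<eta>" using d(2) by blast
    have tE: "t \<in> E" using de(2)[of t] P by auto
    note de2 = de(2)[of t]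
    have est: "\<bar>\<Prod>j<p. Df (f t) ((f t ^^ j) y)\<bar> \<ge> Pr \<epsilon> \<and> \<bar>(f t ^^ p) y - (f t ^^ p) 0\<bar> \<ge> Pr \<epsilon> * \<bar>y\<bar>"
    proof -
      have dd: "\<bar>t\<bar> < \<delta>e" using P by blast
      have H1L: "\<And>x. x \<in> {-1..0} \<Longrightarrow> \<bar>DL (f t) x - DL (f 0) x\<bar> \<le> \<epsilon>/2" using de(2)[OF dd] by blast
      have H1R: "\<And>x. x \<in> {0..1} \<Longrightarrow> \<bar>DR (f t) x - DR (f 0) x\<bar> \<le> \<epsilon>/2" using de(2)[OF dd] by blast
      have H0L: "\<And>x. x \<in> {-1..0} \<Longrightarrow> \<bar>x\<bar> < \<rho>0 \<Longrightarrow> \<bar>DL (f 0) x - DL (f 0) 0\<bar> \<le> \<epsilon>/2"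
        using r1(2) unfolding \<rho>0_def by auto
      have H0R: "\<And>x. x \<in> {0..1} \<Longrightarrow> \<bar>x\<bar> < \<rho>0 \<Longrightarrow> \<bar>DR (f 0) x - DR (f 0) 0\<bar> \<le> \<epsilon>/2"
        using r2(2) unfolding \<rho>0_def by auto
      have yy: "\<bar>y\<bar> < \<rho>0" "y \<in> {-1..1}" using P by blast+
      have Hj: "\<And>i. i < p - 1 \<Longrightarrow> \<rho> i < \<bar>xo f 0 (Suc i)\<bar> \<and>
        (\<forall>x\<in>{-1..1}. \<bar>x - xo f 0 (Suc i)\<bar> < \<rho> i \<longrightarrow> \<bar>Df (f 0) x - Df (f 0) (xo f 0 (Suc i))\<bar> \<le> \<epsilon>/2) \<and>
        \<bar>(f t ^^ Suc i) y - xo f 0 (Suc i)\<bar> < \<rho> i \<and> \<bar>(f t ^^ Suc i) 0 - xo f 0 (Suc i)\<bar> < \<rho> i"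
      proof -
        fix i assume i: "i < p - 1"
        have "i \<in> {..<p - 1}" using i by simp
        then have o: "\<bar>(f t ^^ Suc i) y - xo f 0 (Suc i)\<bar> < \<rho> i \<and> \<bar>(f t ^^ Suc i) 0 - xo f 0 (Suc i)\<bar> < \<rho> i"
          using P by blast
        show "?thesis i" using o \<rho>[OF i] by blast
      qed
      note BE = block_est[OF tE \<epsilon>(1,2) H1L H1R H0L H0R yy Hj p]
      show ?thesis using BE unfolding Pr_def \<mu>_def by blast
    qed
    have "Lam * \<bar>y\<bar> \<le> Pr \<epsilon> * \<bar>y\<bar>" using \<epsilon>(3) by (intro mult_right_mono) auto
    then have "t \<in> E \<and> (\<forall>j. 1 \<le> j \<and> j < p \<longrightarrow> (f t ^^ j) y \<noteq> 0) \<and>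
      Lam \<le> \<bar>\<Prod>j<p. Df (f t) ((f t ^^ j) y)\<bar> \<and>
      \<bar>Dgen f v t y 0 p - Dgen f v 0 0 0 p\<bar> \<le> \<eta> \<and>
      Lam * \<bar>y\<bar> \<le> \<bar>(f t ^^ p) y - (f t ^^ p) 0\<bar>"
      using tE P est \<epsilon>(3) by auto
  }
  ultimately show ?thesis by blast
qed

end


lemma xo_add: "xo f t (N + r) = (f t ^^ r) (xo f t N)"
proof -
  have "(f t ^^ (N + r)) 0 = (f t ^^ (r + N)) 0" by (simp add: add.commute)
  then show ?thesis unfolding xo_def by (simp add: funpow_add)
qed

lemma Dg_add: "Dg f v t (N + r) = Dgen f v t (xo f t N) (Dg f v t N) r"
  by (induction r) (simp_all add: xo_add)

lemma Dgen_lin: "Dgen f v t y d r = (\<Prod>j<r. Df (f t) ((f t ^^ j) y)) * d + Dgen f v t y 0 r"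
  by (induction r) (simp_all add: algebra_simps)

lemma pp_props: assumes "crit_periodic g"
  shows "prime_period g > 0" "(g ^^ prime_period g) 0 = 0"
    "\<And>k. 0 < k \<Longrightarrow> k < prime_period g \<Longrightarrow> (g ^^ k) 0 \<noteq> 0"
proof -
  have ex: "\<exists>n. n > 0 \<and> (g ^^ n) 0 = 0" using assms unfolding crit_periodic_def by auto
  show "prime_period g > 0" "(g ^^ prime_period g) 0 = 0"
    using LeastI_ex[OF ex] unfolding prime_period_def by auto
  show "\<And>k. 0 < k \<Longrightarrow> k < prime_period g \<Longrightarrow> (g ^^ k) 0 \<noteq> 0"
    using not_less_Least unfolding prime_period_def by blast
qed

lemma deriv_isolated_zero:
  assumes "(g has_real_derivative D) (at t0)" "D \<noteq> 0" "g t0 = 0"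
  shows "eventually (\<lambda>t. g t \<noteq> 0) (at t0)"
proof -
  have "((\<lambda>t. (g t - g t0) / (t - t0)) \<longlongrightarrow> D) (at t0)" using assms(1) unfolding has_field_derivative_iff .
  then have "eventually (\<lambda>t. (g t - g t0) / (t - t0) \<noteq> 0) (at t0)"
    using assms(2) by (rule tendsto_imp_eventually_ne)
  then show ?thesis by eventually_elim (use assms(3) in auto)
qed



context fam begin

lemma iter_core:
  fixes t d Lam c g \<eta>w w0 lam B V :: real and p M0 :: nat
  assumes tE: "t \<in> E" and p: "p \<ge> 1" and Lam: "Lam \<ge> 2" and d: "d > 0"
    and LB: "\<And>y. \<bar>y\<bar> < d \<Longrightarrow> y \<in> {-1..1} \<Longrightarrow> (\<forall>j. 1 \<le> j \<and> j < p \<longrightarrow> (f t ^^ j) y \<noteq> 0) \<and>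
       Lam \<le> \<bar>\<Prod>j<p. Df (f t) ((f t ^^ j) y)\<bar> \<and> \<bar>Dgen f v t y 0 p - w0\<bar> \<le> \<eta>w \<and>
       Lam * \<bar>y\<bar> \<le> \<bar>(f t ^^ p) y - (f t ^^ p) 0\<bar>"
    and a: "xo f t p \<noteq> 0"
    and small: "\<And>m. m \<le> Suc M0 \<Longrightarrow> \<bar>xo f t (m * p)\<bar> < d"
    and cdef: "\<bar>w0\<bar> + \<eta>w = c * (Lam - 1)" and c0: "c \<ge> 0" and g: "g = \<bar>w0\<bar> - \<eta>w - c" and g0: "g > 0"
    and lam: "lam > 1" and B: "B * (lam - 1) = V" and B0: "B \<ge> 0"
    and Dfb: "\<And>k. lam \<le> \<bar>Df (f t) (xo f t k)\<bar>" and vb: "\<And>k. \<bar>v t (xo f t k)\<bar> \<le> V"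
    and big: "Lam ^ M0 * g > B + 1"
    and per: "crit_periodic (f t)"
  shows "Dg f v t (prime_period (f t)) \<noteq> 0"
proof -
  define y where "y m = xo f t (m * p)" for m
  define Inb where "Inb m \<longleftrightarrow> \<bar>y m\<bar> < d" for m
  define a where "a = xo f t p"
  have yI: "y m \<in> {-1..1}" for m unfolding y_def by (rule xo_I[OF tE])
  have orb: "xo f t (m * p + r) = (f t ^^ r) (y m)" for m r unfolding y_def by (rule xo_add)
  have ySuc: "y (Suc m) = (f t ^^ p) (y m)" for m
    using orb[of m p] unfolding y_def by (simp add: add.commute)
  have y0: "y 0 = 0" unfolding y_def by simp
  have Fa: "(f t ^^ p) 0 = a" unfolding a_def xo_def ..
  have LBm: "(\<forall>j. 1 \<le> j \<and> j < p \<longrightarrow> (f t ^^ j) (y m) \<noteq> 0) \<and>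
       Lam \<le> \<bar>\<Prod>j<p. Df (f t) ((f t ^^ j) (y m))\<bar> \<and> \<bar>Dgen f v t (y m) 0 p - w0\<bar> \<le> \<eta>w \<and>
       Lam * \<bar>y m\<bar> \<le> \<bar>(f t ^^ p) (y m) - (f t ^^ p) 0\<bar>" if "Inb m" for m
    using LB[of "y m"] that yI[of m] unfolding Inb_def by blast
  have Inb0: "Inb 0" unfolding Inb_def using y0 d by simp
  have a0: "\<bar>a\<bar> > 0" using a unfolding a_def by simp
  have C1: "\<bar>y m\<bar> \<ge> \<bar>a\<bar>" if "1 \<le> m" "\<forall>m'<m. Inb m'" for m
    using that
  proof (induction m)
    case 0 then show ?case by simp
  next
    case (Suc m)
    show ?case
    proof (cases "m = 0")
      case True then show ?thesis using ySuc[of 0] y0 Fa by simp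
    next
      case False
      have IH: "\<bar>y m\<bar> \<ge> \<bar>a\<bar>" using Suc.IH Suc.prems False by auto
      have "Inb m" using Suc.prems by auto
      then have "Lam * \<bar>y m\<bar> \<le> \<bar>y (Suc m) - a\<bar>" using LBm[of m] ySuc[of m] Fa by simp
      moreover have "Lam * \<bar>y m\<bar> \<ge> 2 * \<bar>a\<bar>" using IH Lam by (meson abs_ge_zero mult_mono zero_le_numeral order_trans)
      ultimately show ?thesis by linarith
    qed
  qed
  have C3: "xo f t (m * p + r) \<noteq> 0" if "\<forall>m'\<le>m. Inb m'" "r < p" "1 \<le> m * p + r" for m r
  proof (cases "r \<ge> 1")
    case True
    then have "(f t ^^ r) (y m) \<noteq> 0" using LBm[of m] that by auto
    then show ?thesis using orb by simp
  next
    case False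
    then have r0: "r = 0" by simp
    then have "m \<ge> 1" using that(3) by (cases m) auto
    then have "\<bar>y m\<bar> \<ge> \<bar>a\<bar>" using C1[of m] that(1) by auto
    then show ?thesis using a0 r0 unfolding y_def by auto
  qed
  obtain q where q: "q = prime_period (f t)" by simp
  have qpos: "q > 0" and qz: "xo f t q = 0" using pp_props[OF per] q unfolding xo_def by auto
  have decomp: "k = (k div p) * p + k mod p" for k by simp
  have kmod: "k mod p < p" for k using p by auto
  have exM: "\<exists>m. 1 \<le> m \<and> \<not> Inb m"
  proof (rule ccontr)
    assume "\<not> ?thesis"
    then have allI: "\<forall>m. Inb m" using Inb0 by (metis less_one not_le)
    have "xo f t q \<noteq> 0"
      using C3[of "q div p" "q mod p"] allI kmod[of q] qpos decomp[of q] by auto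
    then show False using qz by simp
  qed
  define M where "M = (LEAST m. 1 \<le> m \<and> \<not> Inb m)"
  have M: "1 \<le> M" "\<not> Inb M" using LeastI_ex[OF exM] unfolding M_def by auto
  have belowM: "Inb m" if "m < M" for m
  proof (cases "m = 0")
    case True then show ?thesis using Inb0 by simp
  next
    case False
    then show ?thesis using not_less_Least[of m "\<lambda>m. 1 \<le> m \<and> \<not> Inb m"] that unfolding M_def by auto
  qed
  have MM0: "M > Suc M0"
  proof (rule ccontr)
    assume "\<not> M > Suc M0"
    then have "Inb M" using small[of M] unfolding Inb_def y_def by auto
    then show False using M by simp
  qed
  have C4: "\<bar>Dg f v t (m * p)\<bar> \<ge> c + Lam ^ (m - 1) * g" if "1 \<le> m" "m \<le> M" for m
    using that
  proof (induction m)
    case 0 then show ?case by simp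
  next
    case (Suc m)
    show ?case
    proof (cases "m = 0")
      case True
      have "Dg f v t (Suc 0 * p) = Dgen f v t 0 0 p" using Dg_add[of f v t 0 p] by simp
      moreover have "\<bar>Dgen f v t (y 0) 0 p - w0\<bar> \<le> \<eta>w" using LBm[OF Inb0] by blast
      ultimately have "\<bar>Dg f v t (Suc 0 * p)\<bar> \<ge> \<bar>w0\<bar> - \<eta>w" using y0 by auto
      then show ?thesis using True g by simp
    next
      case False
      have IH: "\<bar>Dg f v t (m * p)\<bar> \<ge> c + Lam ^ (m - 1) * g" using Suc.IH Suc.prems False by auto
      have Im: "Inb m" using Suc.prems belowM by auto
      let ?P = "\<Prod>j<p. Df (f t) ((f t ^^ j) (y m))" and ?W = "Dgen f v t (y m) 0 p" and ?D = "Dg f v t (m * p)"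
      have eq: "Dg f v t (Suc m * p) = ?P * ?D + ?W"
        using Dg_add[of f v t "m * p" p] Dgen_lin[of f v t "y m" ?D p] unfolding y_def by (simp add: add.commute)
      have P: "\<bar>?P\<bar> \<ge> Lam" and W: "\<bar>?W - w0\<bar> \<le> \<eta>w" using LBm[OF Im] by auto
      have W': "\<bar>?W\<bar> \<le> c * (Lam - 1)" using W cdef by linarith
      have Dnn: "c + Lam ^ (m - 1) * g \<ge> 0" using c0 g0 Lam by auto
      have "\<bar>?P * ?D\<bar> \<ge> Lam * (c + Lam ^ (m - 1) * g)"
        unfolding abs_mult using P IH Dnn Lam by (intro mult_mono) auto
      moreover have "Lam * (c + Lam ^ (m - 1) * g) - c * (Lam - 1) = c + Lam ^ (Suc m - 1) * g"
        using False by (cases m) (auto simp: algebra_simps)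
      ultimately show ?thesis unfolding eq using W' by linarith
    qed
  qed
  have "\<bar>Dg f v t (M * p)\<bar> \<ge> c + Lam ^ (M - 1) * g" using C4[OF M(1)] by simp
  moreover have "Lam ^ (M - 1) \<ge> Lam ^ M0" using Lam MM0 by (intro power_increasing) auto
  ultimately have DM: "\<bar>Dg f v t (M * p)\<bar> \<ge> B + 1"
    using big c0 g0 mult_right_mono[of "Lam ^ M0" "Lam ^ (M - 1)" g] by linarith
  have qM: "q > M * p"
  proof (rule ccontr)
    assume "\<not> q > M * p"
    then consider "q = M * p" | "q < M * p" by linarith
    then show False
    proof cases
      case 1
      then have "y M = 0" using qz unfolding y_def by simp
      then show False using M(2) d unfolding Inb_def by simp
    next
      case 2
      then have "q div p < M" using p by (simp add: less_mult_imp_div_less)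
      then have "\<forall>m'\<le>q div p. Inb m'" using belowM by auto
      then have "xo f t q \<noteq> 0" using C3[of "q div p" "q mod p"] kmod[of q] qpos decomp[of q] by auto
      then show False using qz by simp
    qed
  qed
  have "\<bar>Dg f v t (M * p + (q - M * p))\<bar> \<ge> lam ^ (q - M * p) + B"
    by (rule growth[OF lam B Dfb vb DM B0])
  moreover have "M * p + (q - M * p) = q" using qM by simp
  ultimately have "\<bar>Dg f v t q\<bar> > 0" using B0 lam by (smt (verit) zero_less_power)
  then show ?thesis using q by simp
qed

end


context fam begin

lemma lip_iter: assumes U: "U1 g" and KL: "\<And>x. x \<in> {-1..0} \<Longrightarrow> \<bar>DL g x\<bar> \<le> K"
  and KR: "\<And>x. x \<in> {0..1} \<Longrightarrow> \<bar>DR g x\<bar> \<le> K" and K: "K \<ge> 0"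
  and u: "u \<in> {-1..1}" and w: "w \<in> {-1..1}"
  shows "\<bar>(g ^^ k) u - (g ^^ k) w\<bar> \<le> K ^ k * \<bar>u - w\<bar>"
proof (induction k)
  case 0 then show ?case by simp
next
  case (Suc k)
  have "\<bar>g ((g ^^ k) u) - g ((g ^^ k) w)\<bar> \<le> K * \<bar>(g ^^ k) u - (g ^^ k) w\<bar>"
    using U1_lip[OF U KL KR U1_iter[OF U w] U1_iter[OF U u]] by (simp add: abs_minus_commute)
  also have "\<dots> \<le> K * (K ^ k * \<bar>u - w\<bar>)" using Suc K by (intro mult_left_mono) auto
  finally show ?case by simp
qed

lemma main_claim:
  assumes cp: "crit_periodic (f 0)" and good: "good (f 0)" and J0: "J (f 0) (v 0) \<noteq> 0"
  shows "\<exists>\<delta>2>0. \<forall>t. t \<noteq> 0 \<longrightarrow> \<bar>t\<bar> < \<delta>2 \<longrightarrow> crit_periodic (f t) \<longrightarrow>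
          t \<in> E \<and> Dg f v t (prime_period (f t)) \<noteq> 0"
proof -
  define p where "p = prime_period (f 0)"
  have ppos: "p > 0" and pz: "xo f 0 p = 0" using pp_props[OF cp] unfolding p_def xo_def by auto
  have nz: "xo f 0 k \<noteq> 0" if "1 \<le> k" "k < p" for k using pp_props(3)[OF cp, of k] that unfolding p_def xo_def by auto
  define \<mu> where "\<mu> = min \<bar>DR (f 0) 0\<bar> \<bar>DL (f 0) 0\<bar>"
  define A where "A = Dfn (f 0) (p - 1) (f 0 0)"
  have gd: "p \<ge> 2" "\<bar>A\<bar> * \<mu> > 2" using good cp unfolding good_def A_def \<mu>_def p_def by auto
  have Aprod: "\<bar>A\<bar> = (\<Prod>i<p - 1. \<bar>Df (f 0) (xo f 0 (Suc i))\<bar>)"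
    unfolding A_def Dfn_def abs_prod xo_def by (simp add: xo_shift)
  define w0 where "w0 = Dg f v 0 p"
  have "Dg f v 0 (Suc (p - 1)) = A * (\<Sum>j<Suc (p - 1). v 0 (xo f 0 j) / Dfn (f 0) j (f 0 0))"
    unfolding A_def by (rule Dg_rel[OF zE])
  then have w0A: "w0 = A * J (f 0) (v 0)" using ppos cp unfolding w0_def J_def p_def xo_def by simp
  have A0: "A \<noteq> 0" unfolding A_def by (rule Dfn_nz[OF fU1[OF zE] U1_maps[OF fU1[OF zE]]]) auto
  have w0nz: "w0 \<noteq> 0" using w0A A0 J0 by simp
  define Lam where "Lam = (2 + \<mu> * \<bar>A\<bar>) / 2"
  have Lam: "Lam > 2" "Lam < \<mu> * \<bar>A\<bar>" using gd(2) unfolding Lam_def by (auto simp: mult.commute)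
  define \<eta>w where "\<eta>w = \<bar>w0\<bar> * (Lam - 2) / (2 * Lam)"
  have \<eta>w: "\<eta>w > 0" using w0nz Lam unfolding \<eta>w_def by auto
  have \<eta>wL: "\<eta>w * Lam = \<bar>w0\<bar> * (Lam - 2) / 2" using Lam unfolding \<eta>w_def by (auto simp: field_simps)
  define c where "c = (\<bar>w0\<bar> + \<eta>w) / (Lam - 1)"
  have cdef: "\<bar>w0\<bar> + \<eta>w = c * (Lam - 1)" using Lam unfolding c_def by auto
  have c0: "c \<ge> 0" using Lam \<eta>w unfolding c_def by auto
  define g where "g = \<bar>w0\<bar> - \<eta>w - c"
  have g0: "g > 0"
  proof -
    have "(\<bar>w0\<bar> - \<eta>w) * (Lam - 1) - (\<bar>w0\<bar> + \<eta>w) = \<bar>w0\<bar> * (Lam - 2) - \<eta>w * Lam" by (simp add: algebra_simps)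
    also have "\<dots> = \<bar>w0\<bar> * (Lam - 2) / 2" using \<eta>wL by simp
    also have "\<dots> > 0" using w0nz Lam by auto
    finally have "(\<bar>w0\<bar> - \<eta>w) * (Lam - 1) > c * (Lam - 1)" using cdef by linarith
    then have "\<bar>w0\<bar> - \<eta>w > c" using Lam by (simp add: mult_less_cancel_right)
    then show ?thesis unfolding g_def by simp
  qed
  obtain \<delta>0 lam V K where bd: "\<delta>0 > 0" "lam > 1" "V \<ge> 0"
    "\<And>t. \<bar>t\<bar> < \<delta>0 \<Longrightarrow> t \<in> E"
    "\<And>t x. \<bar>t\<bar> < \<delta>0 \<Longrightarrow> x \<in> {-1..0} \<Longrightarrow> lam \<le> DL (f t) x \<and> DL (f t) x \<le> K"
    "\<And>t x. \<bar>t\<bar> < \<delta>0 \<Longrightarrow> x \<in> {0..1} \<Longrightarrow> -K \<le> DR (f t) x \<and> DR (f t) x \<le> -lam"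
    "\<And>t x. \<bar>t\<bar> < \<delta>0 \<Longrightarrow> x \<in> {-1..1} \<Longrightarrow> \<bar>v t x\<bar> \<le> V"
    "\<And>t x. \<bar>t\<bar> < \<delta>0 \<Longrightarrow> x \<in> {-1..1} \<Longrightarrow> lam \<le> \<bar>Df (f t) x\<bar> \<and> \<bar>Df (f t) x\<bar> \<le> K"
    by (rule bounds0) (rule that; assumption)
  have K0: "K \<ge> 0" using bd(5)[of 0 0] bd(1,2) by auto
  define B where "B = V / (lam - 1)"
  have B: "B * (lam - 1) = V" "B \<ge> 0" using bd(2,3) unfolding B_def by auto
  obtain M0 where M0: "(B + 1) / g < Lam ^ M0" using real_arch_pow[of Lam] Lam by auto
  have big: "Lam ^ M0 * g > B + 1" using M0 g0 by (simp add: divide_less_eq)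
  obtain d1 where d1: "d1 > 0" "\<And>t y. t \<noteq> 0 \<Longrightarrow> \<bar>t\<bar> < d1 \<Longrightarrow> \<bar>y\<bar> < d1 \<Longrightarrow> y \<in> {-1..1} \<Longrightarrow> t \<in> E \<and>
    (\<forall>j. 1 \<le> j \<and> j < p \<longrightarrow> (f t ^^ j) y \<noteq> 0) \<and>
    Lam \<le> \<bar>\<Prod>j<p. Df (f t) ((f t ^^ j) y)\<bar> \<and>
    \<bar>Dgen f v t y 0 p - Dgen f v 0 0 0 p\<bar> \<le> \<eta>w \<and>
    Lam * \<bar>y\<bar> \<le> \<bar>(f t ^^ p) y - (f t ^^ p) 0\<bar>"
    using local_block[of p Lam \<eta>w] ppos nz Lam(2) \<eta>w Aprod unfolding \<mu>_def by auto
  have w0D: "Dgen f v 0 0 0 p = w0" unfolding w0_def by (simp add: Dg_Dgen)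
  define Kp where "Kp = K ^ p + 1"
  have Kp: "Kp \<ge> 1" using K0 unfolding Kp_def by auto
  have der0: "((\<lambda>t. xo f t p) has_real_derivative w0) (at 0)"
    unfolding w0_def by (rule orbit_deriv[OF zE]) (use nz in auto)
  have "((\<lambda>t. xo f t p) \<longlongrightarrow> 0) (at 0)"
    using DERIV_isCont[OF der0] pz by (simp add: isCont_def)
  moreover have "d1 / Kp ^ Suc M0 > 0" using d1 Kp by auto
  ultimately have ev1: "eventually (\<lambda>t. \<bar>xo f t p\<bar> < d1 / Kp ^ Suc M0) (at 0)"
    by (rule T_small)
  have ev2: "eventually (\<lambda>t. xo f t p \<noteq> 0) (at 0)"
    by (rule deriv_isolated_zero[OF der0 w0nz pz])
  obtain \<delta>a where da: "\<delta>a > 0" "\<And>t. t \<noteq> 0 \<Longrightarrow> \<bar>t\<bar> < \<delta>a \<Longrightarrow> \<bar>xo f t p\<bar> < d1 / Kp ^ Suc M0 \<and> xo f t p \<noteq> 0"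
    using eventually_conj[OF ev1 ev2] unfolding eventually_at by (auto simp: dist_real_def)
  define \<delta>2 where "\<delta>2 = min (min \<delta>0 d1) \<delta>a"
  have "\<delta>2 > 0" using bd(1) d1(1) da(1) unfolding \<delta>2_def by auto
  moreover
  {
    fix t assume t: "t \<noteq> 0" "\<bar>t\<bar> < \<delta>2" "crit_periodic (f t)"
    have t0: "\<bar>t\<bar> < \<delta>0" "\<bar>t\<bar> < d1" "\<bar>t\<bar> < \<delta>a" using t unfolding \<delta>2_def by auto
    have tE: "t \<in> E" by (rule bd(4)[OF t0(1)])
    have U: "U1 (f t)" by (rule fU1[OF tE])
    have KL: "\<And>x. x \<in> {-1..0} \<Longrightarrow> \<bar>DL (f t) x\<bar> \<le> K" using bd(5)[OF t0(1)] bd(2) by fastforce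
    have KR: "\<And>x. x \<in> {0..1} \<Longrightarrow> \<bar>DR (f t) x\<bar> \<le> K" using bd(6)[OF t0(1)] bd(2) by fastforce
    have at: "\<bar>xo f t p\<bar> < d1 / Kp ^ Suc M0" "xo f t p \<noteq> 0" using da(2)[OF t(1) t0(3)] by auto
    have up: "\<bar>xo f t (m * p)\<bar> \<le> Kp ^ m * \<bar>xo f t p\<bar>" for m
    proof (induction m)
      case 0 then show ?case by simp
    next
      case (Suc m)
      have e1: "xo f t (Suc m * p) = (f t ^^ p) (xo f t (m * p))"
        using xo_add[of f t "m * p" p] by (simp add: add.commute)
      have e2: "(f t ^^ p) 0 = xo f t p" unfolding xo_def ..
      have "\<bar>(f t ^^ p) (xo f t (m * p)) - (f t ^^ p) 0\<bar> \<le> K ^ p * \<bar>xo f t (m * p) - 0\<bar>"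
        by (rule lip_iter[OF U KL KR K0 xo_I[OF tE]]) auto
      then have "\<bar>xo f t (Suc m * p)\<bar> \<le> K ^ p * \<bar>xo f t (m * p)\<bar> + \<bar>xo f t p\<bar>"
        unfolding e1 e2 by (simp add: abs_le_iff) linarith
      also have "\<dots> \<le> K ^ p * (Kp ^ m * \<bar>xo f t p\<bar>) + Kp ^ m * \<bar>xo f t p\<bar>"
      proof (intro add_mono mult_left_mono)
        show "\<bar>xo f t (m * p)\<bar> \<le> Kp ^ m * \<bar>xo f t p\<bar>" by (rule Suc)
        show "0 \<le> K ^ p" using K0 by simp
        have "1 \<le> Kp ^ m" using Kp by (rule one_le_power)
        then show "\<bar>xo f t p\<bar> \<le> Kp ^ m * \<bar>xo f t p\<bar>" using mult_right_mono[of 1 "Kp ^ m" "\<bar>xo f t p\<bar>"] by simp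
      qed
      also have "\<dots> = Kp ^ Suc m * \<bar>xo f t p\<bar>" unfolding Kp_def by (simp add: algebra_simps)
      finally show ?case .
    qed
    have small: "\<bar>xo f t (m * p)\<bar> < d1" if "m \<le> Suc M0" for m
    proof -
      have "\<bar>xo f t (m * p)\<bar> \<le> Kp ^ m * \<bar>xo f t p\<bar>" by (rule up)
      also have "\<dots> \<le> Kp ^ Suc M0 * \<bar>xo f t p\<bar>" using Kp that by (intro mult_right_mono power_increasing) auto
      also have "\<dots> < Kp ^ Suc M0 * (d1 / Kp ^ Suc M0)" using at(1) Kp by (intro mult_strict_left_mono) auto
      also have "\<dots> = d1" using Kp by simp
      finally show ?thesis .
    qed
    have LB: "\<And>y. \<bar>y\<bar> < d1 \<Longrightarrow> y \<in> {-1..1} \<Longrightarrow> (\<forall>j. 1 \<le> j \<and> j < p \<longrightarrow> (f t ^^ j) y \<noteq> 0) \<and>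
       Lam \<le> \<bar>\<Prod>j<p. Df (f t) ((f t ^^ j) y)\<bar> \<and> \<bar>Dgen f v t y 0 p - w0\<bar> \<le> \<eta>w \<and>
       Lam * \<bar>y\<bar> \<le> \<bar>(f t ^^ p) y - (f t ^^ p) 0\<bar>"
      using d1(2)[OF t(1) t0(2)] w0D by auto
    have "Dg f v t (prime_period (f t)) \<noteq> 0"
    proof (rule iter_core[OF tE _ _ d1(1) LB at(2) small cdef c0 _ g0 bd(2) B(1) B(2) _ _ big t(3)])
      show "1 \<le> p" using ppos by simp
      show "2 \<le> Lam" using Lam by simp
      show "g = \<bar>w0\<bar> - \<eta>w - c" unfolding g_def ..
      show "\<And>k. lam \<le> \<bar>Df (f t) (xo f t k)\<bar>" using bd(8)[OF t0(1) xo_I[OF tE]] by auto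
      show "\<And>k. \<bar>v t (xo f t k)\<bar> \<le> V" using bd(7)[OF t0(1) xo_I[OF tE]] by auto
    qed
    then have "t \<in> E \<and> Dg f v t (prime_period (f t)) \<noteq> 0" using tE by simp
  }
  ultimately show ?thesis by blast
qed

end


context fam begin

lemma partA:
  assumes cp: "crit_periodic (f 0)" and good: "good (f 0)" and J0: "J (f 0) (v 0) \<noteq> 0" and \<delta>: "\<delta> > 0"
  shows "\<exists>t. t \<in> E \<and> \<bar>t\<bar> < \<delta> \<and> \<not> crit_periodic (f t)"
proof (rule ccontr)
  assume H: "\<not> ?thesis"
  obtain \<delta>2 where d2: "\<delta>2 > 0" "\<And>t. t \<noteq> 0 \<Longrightarrow> \<bar>t\<bar> < \<delta>2 \<Longrightarrow> crit_periodic (f t) \<Longrightarrow>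
          t \<in> E \<and> Dg f v t (prime_period (f t)) \<noteq> 0"
    using main_claim[OF cp good J0] by blast
  define d where "d = min \<delta> (min \<delta>2 e)"
  have d: "d > 0" using \<delta> d2(1) e_pos unfolding d_def by auto
  define S where "S = {0<..<d}"
  have Sp: "crit_periodic (f t)" if "t \<in> S" for t
  proof -
    have "t \<in> E" "\<bar>t\<bar> < \<delta>" using that unfolding S_def d_def by auto
    then show ?thesis using H by auto
  qed
  define Z where "Z q = {t \<in> S. prime_period (f t) = q}" for q
  have SZ: "S = (\<Union>q. Z q)" unfolding Z_def by auto
  have cZ: "countable (Z q)" for q
  proof -
    have nl: "\<not> t islimpt (Z q)" if t: "t \<in> Z q" for t
    proof -
      have tS: "t \<in> S" and tq: "prime_period (f t) = q" using t unfolding Z_def by auto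
      have t0: "t \<noteq> 0" "\<bar>t\<bar> < \<delta>2" using tS unfolding S_def d_def by auto
      have cpt: "crit_periodic (f t)" by (rule Sp[OF tS])
      have tE: "t \<in> E" and Dnz: "Dg f v t q \<noteq> 0" using d2(2)[OF t0 cpt] tq by auto
      have nzk: "xo f t k \<noteq> 0" if "1 \<le> k" "k < q" for k
        using pp_props(3)[OF cpt, of k] that tq unfolding xo_def by auto
      have qz: "xo f t q = 0" using pp_props(2)[OF cpt] tq unfolding xo_def by simp
      have der: "((\<lambda>s. xo f s q) has_real_derivative Dg f v t q) (at t)"
        by (rule orbit_deriv[OF tE nzk])
      have "eventually (\<lambda>s. xo f s q \<noteq> 0) (at t)" by (rule deriv_isolated_zero[OF der Dnz qz])
      moreover have "xo f s q = 0" if "s \<in> Z q" for s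
      proof -
        have "s \<in> S" "prime_period (f s) = q" using that unfolding Z_def by auto
        then show ?thesis using pp_props(2)[OF Sp] unfolding xo_def by auto
      qed
      ultimately have "eventually (\<lambda>s. s \<notin> Z q) (at t)" by (auto elim: eventually_mono)
      then show ?thesis unfolding islimpt_iff_eventually by simp
    qed
    define D where "D = - {x. x islimpt (Z q)}"
    have oD: "open D" unfolding D_def by (rule open_Compl[OF closed_limpts])
    have sp: "Z q sparse_in D" using sparse_in_open[OF oD, of "Z q"] unfolding D_def by simp
    have "Z q \<subseteq> D" using nl unfolding D_def by auto
    then have "D \<inter> Z q = Z q" by auto
    then show ?thesis using sparse_imp_countable[OF oD sp] by simp
  qed
  have "countable S" unfolding SZ by (intro countable_UN) (auto intro: cZ)
  moreover have "uncountable S" unfolding S_def using d by (simp add: uncountable_open_interval)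
  ultimately show False by simp
qed

lemma seq_from:
  assumes "\<And>\<delta>. \<delta> > 0 \<Longrightarrow> \<exists>t. t \<in> E \<and> \<bar>t\<bar> < \<delta> \<and> P t"
  shows "\<exists>tn :: nat \<Rightarrow> real. (\<forall>n. tn n \<in> E \<and> P (tn n)) \<and> tn \<longlonglongrightarrow> 0"
proof -
  have "\<forall>n. \<exists>t. t \<in> E \<and> \<bar>t\<bar> < 1 / real (Suc n) \<and> P t" using assms by auto
  then obtain tn where tn: "\<And>n. tn n \<in> E \<and> \<bar>tn n\<bar> < 1 / real (Suc n) \<and> P (tn n)" by metis
  have "tn \<longlonglongrightarrow> 0" by (rule LIMSEQ_norm_0) (use tn in auto)
  then show ?thesis using tn by blast
qed

end

theorem corollary4p1:
  fixes f v :: "real \<Rightarrow> real \<Rightarrow> real" and e :: real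
  assumes fam: "C1_family e f v"
    and good0: "good (f 0)"
    and J0: "J (f 0) (v 0) \<noteq> 0"
  shows "(crit_periodic (f 0) \<longrightarrow>
            (\<exists>tn :: nat \<Rightarrow> real. (\<forall>n. tn n \<in> {-e<..<e} \<and> \<not> crit_periodic (f (tn n)))
                               \<and> tn \<longlonglongrightarrow> 0))
       \<and> (\<not> crit_periodic (f 0) \<longrightarrow>
            (\<exists>tn :: nat \<Rightarrow> real. (\<forall>n. tn n \<in> {-e<..<e} \<and> crit_periodic (f (tn n)))
                               \<and> tn \<longlonglongrightarrow> 0))"
proof -
  interpret fam e f v by (rule fam.intro[OF fam])
  show ?thesis
  proof (intro conjI impI)
    assume cp: "crit_periodic (f 0)"
    show "\<exists>tn :: nat \<Rightarrow> real. (\<forall>n. tn n \<in> {-e<..<e} \<and> \<not> crit_periodic (f (tn n))) \<and> tn \<longlonglongrightarrow> 0"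
      by (rule seq_from) (rule partA[OF cp good0 J0])
  next
    assume np: "\<not> crit_periodic (f 0)"
    show "\<exists>tn :: nat \<Rightarrow> real. (\<forall>n. tn n \<in> {-e<..<e} \<and> crit_periodic (f (tn n))) \<and> tn \<longlonglongrightarrow> 0"
      by (rule seq_from) (rule partB[OF np J0])
  qed
qed



end
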